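(* For every $n>1$, the structure $\mathcal{M}_n$ does not eliminate finite imaginaries.
   Context: For $n\geq1$, $\mathcal{M}_n$ is the two-sorted structure with sort $P=\mathbb{C}$ carrying the full field structure $(\mathbb{C},+,\cdot)$, sort $S=\mathbb{C}\times\mathbb{C}$, the projection $\pi:S\to P$, $(\alpha,a')\mapsto\alpha$, the addition $\oplus$ on $S$, $((\alpha,a'),(\beta,b'))\mapsto(\alpha+\beta,a'+b')$, the action $\star$ of $P$ on $S$, $\beta\star(\alpha,a')=(\alpha,a'+\beta)$, and the $(n+1)$-ary relation $R_n$ on $S$: $R_n((\alpha_1,a_1'),\ldots,(\alpha_{n+1},a_{n+1}'))$ holds iff $\alpha_i=\alpha_1^i$ for all $i\leq n+1$ and $a_{n+1}'=\sum_{i=1}^{n}\binom{n+1}{i}(-1)^{n-i}\alpha_{n+1-i}a_i'$. A structure eliminates finite imaginaries if every finite set of real tuples has a real canonical parameter, i.e. is coded by a tuple of elements of the real sorts (here $S$ and $P$). *)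

theory Defs
  imports Complex_Main
begin

datatype ptm = PV nat | PZero | POne | PPlus ptm ptm | PTimes ptm ptm | PUminus ptm
  | Proj stm
and stm = SV nat | SPlus stm stm | Act ptm stm

datatype fm = EqP ptm ptm | EqS stm stm | Rel "stm list" | FNot fm | FAnd fm fm
  | ExistsP nat fm | ExistsS nat fm

primrec evp :: "(nat \<Rightarrow> complex) \<Rightarrow> (nat \<Rightarrow> complex \<times> complex) \<Rightarrow> ptm \<Rightarrow> complex"
  and evs :: "(nat \<Rightarrow> complex) \<Rightarrow> (nat \<Rightarrow> complex \<times> complex) \<Rightarrow> stm \<Rightarrow> complex \<times> complex"
where
  "evp ep es (PV i) = ep i"
| "evp ep es PZero = 0"
| "evp ep es POne = 1"
| "evp ep es (PPlus t u) = evp ep es t + evp ep es u"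
| "evp ep es (PTimes t u) = evp ep es t * evp ep es u"
| "evp ep es (PUminus t) = - evp ep es t"
| "evp ep es (Proj s) = fst (evs ep es s)"
| "evs ep es (SV i) = es i"
| "evs ep es (SPlus s t) = (fst (evs ep es s) + fst (evs ep es t), snd (evs ep es s) + snd (evs ep es t))"
| "evs ep es (Act b s) = (fst (evs ep es s), snd (evs ep es s) + evp ep es b)"

text \<open>The relation R_n on S^(n+1); the list index i-1 holds the i-th argument.\<close>
definition Rn :: "nat \<Rightarrow> (complex \<times> complex) list \<Rightarrow> bool" where
  "Rn n xs \<longleftrightarrow> length xs = Suc n
     \<and> (\<forall>i\<in>{1..Suc n}. fst (xs ! (i - 1)) = fst (xs ! 0) ^ i)
     \<and> snd (xs ! n) = (\<Sum>i=1..n. of_nat (Suc n choose i) * (-1) ^ (n - i)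
                                   * fst (xs ! (n - i)) * snd (xs ! (i - 1)))"

primrec sat :: "nat \<Rightarrow> (nat \<Rightarrow> complex) \<Rightarrow> (nat \<Rightarrow> complex \<times> complex) \<Rightarrow> fm \<Rightarrow> bool" where
  "sat n ep es (EqP t u) = (evp ep es t = evp ep es u)"
| "sat n ep es (EqS s t) = (evs ep es s = evs ep es t)"
| "sat n ep es (Rel ss) = Rn n (map (evs ep es) ss)"
| "sat n ep es (FNot \<phi>) = (\<not> sat n ep es \<phi>)"
| "sat n ep es (FAnd \<phi> \<psi>) = (sat n ep es \<phi> \<and> sat n ep es \<psi>)"
| "sat n ep es (ExistsP v \<phi>) = (\<exists>z. sat n (ep(v := z)) es \<phi>)"
| "sat n ep es (ExistsS v \<phi>) = (\<exists>z. sat n ep (es(v := z)) \<phi>)"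

text \<open>Assignment from a list; variables beyond the list get a fixed default
  (0 in P, (0,0) in S; both are 0-definable, so this is harmless).\<close>
definition lenv :: "'a \<Rightarrow> 'a list \<Rightarrow> nat \<Rightarrow> 'a" where
  "lenv d zs i = (if i < length zs then zs ! i else d)"

text \<open>A real tuple = (P-components, S-components). Formula phi defines, with parameter
  tuple c = (cp, cs), the set of tuples (a, b): P-variables 0..k-1 are a, then cp;
  S-variables 0..l-1 are b, then cs.\<close>
definition defines_with :: "nat \<Rightarrow> nat \<Rightarrow> nat \<Rightarrow> fm \<Rightarrow> complex list \<Rightarrow> (complex \<times> complex) list
    \<Rightarrow> (complex list \<times> (complex \<times> complex) list) set \<Rightarrow> bool" where
  "defines_with n k l \<phi> cp cs F \<longleftrightarrow>
     (\<forall>a b. length a = k \<and> length b = l \<longrightarrow>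
        ((a, b) \<in> F \<longleftrightarrow> sat n (lenv 0 (a @ cp)) (lenv (0, 0) (b @ cs)) \<phi>))"

definition is_code :: "nat \<Rightarrow> nat \<Rightarrow> nat \<Rightarrow> (complex list \<times> (complex \<times> complex) list) set
    \<Rightarrow> complex list \<Rightarrow> (complex \<times> complex) list \<Rightarrow> bool" where
  "is_code n k l F cp cs \<longleftrightarrow> (\<exists>\<phi>. defines_with n k l \<phi> cp cs F \<and>
     (\<forall>cp' cs'. length cp' = length cp \<and> length cs' = length cs \<and> defines_with n k l \<phi> cp' cs' F
        \<longrightarrow> cp' = cp \<and> cs' = cs))"

definition elim_finite_imaginaries :: "nat \<Rightarrow> bool" where
  "elim_finite_imaginaries n \<longleftrightarrow>
     (\<forall>k l (F :: (complex list \<times> (complex \<times> complex) list) set).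
        finite F \<and> (\<forall>(a, b)\<in>F. length a = k \<and> length b = l)
        \<longrightarrow> (\<exists>cp cs. is_code n k l F cp cs))"

end

theory Submission
  imports Defs "HOL-Computational_Algebra.Fundamental_Theorem_Algebra" "HOL-Analysis.Continuum_Not_Denumerable" "HOL-Library.Countable_Set"
begin

definition sf :: "complex set \<Rightarrow> bool" where
  "sf K \<longleftrightarrow> 0 \<in> K \<and> 1 \<in> K \<and> (\<forall>x\<in>K. \<forall>y\<in>K. x + y \<in> K) \<and> (\<forall>x\<in>K. \<forall>y\<in>K. x * y \<in> K)
     \<and> (\<forall>x\<in>K. - x \<in> K) \<and> (\<forall>x\<in>K. inverse x \<in> K)"

lemma sf_0: "sf K \<Longrightarrow> 0 \<in> K" by (simp add: sf_def)
lemma sf_1: "sf K \<Longrightarrow> 1 \<in> K" by (simp add: sf_def)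
lemma sf_add: "sf K \<Longrightarrow> x \<in> K \<Longrightarrow> y \<in> K \<Longrightarrow> x + y \<in> K" by (simp add: sf_def)
lemma sf_mult: "sf K \<Longrightarrow> x \<in> K \<Longrightarrow> y \<in> K \<Longrightarrow> x * y \<in> K" by (simp add: sf_def)
lemma sf_uminus: "sf K \<Longrightarrow> x \<in> K \<Longrightarrow> - x \<in> K" by (simp add: sf_def)
lemma sf_inverse: "sf K \<Longrightarrow> x \<in> K \<Longrightarrow> inverse x \<in> K" by (simp add: sf_def)
lemma sf_diff: "sf K \<Longrightarrow> x \<in> K \<Longrightarrow> y \<in> K \<Longrightarrow> x - y \<in> K"
  using sf_add[of K x "-y"] sf_uminus[of K y] by simp
lemma sf_divide: "sf K \<Longrightarrow> x \<in> K \<Longrightarrow> y \<in> K \<Longrightarrow> x / y \<in> K"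
  using sf_mult[of K x "inverse y"] sf_inverse[of K y] by (simp add: divide_inverse)
lemma sf_of_nat: "sf K \<Longrightarrow> of_nat m \<in> K"
  by (induction m) (auto simp: sf_0 sf_1 sf_add)
lemma sf_power: "sf K \<Longrightarrow> x \<in> K \<Longrightarrow> x ^ m \<in> K"
  by (induction m) (auto simp: sf_1 sf_mult)
lemma sf_sum: "sf K \<Longrightarrow> (\<And>i. i \<in> A \<Longrightarrow> f i \<in> K) \<Longrightarrow> sum f A \<in> K"
  by (induction A rule: infinite_finite_induct) (auto simp: sf_0 sf_add)
lemma sf_UNIV: "sf UNIV" by (simp add: sf_def)

definition KP :: "complex set \<Rightarrow> complex poly set" where
  "KP K = {p. \<forall>i. Polynomial.coeff p i \<in> K}"

lemma KP_coeff: "p \<in> KP K \<Longrightarrow> Polynomial.coeff p i \<in> K" by (simp add: KP_def)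
lemma KP_0: "sf K \<Longrightarrow> 0 \<in> KP K" by (simp add: KP_def sf_0)
lemma KP_const: "sf K \<Longrightarrow> c \<in> K \<Longrightarrow> [:c:] \<in> KP K"
  by (auto simp: KP_def coeff_pCons sf_0 split: nat.split)
lemma KP_1: "sf K \<Longrightarrow> 1 \<in> KP K" using KP_const[of K 1] by (simp add: sf_1 one_pCons)
lemma KP_pCons: "sf K \<Longrightarrow> c \<in> K \<Longrightarrow> p \<in> KP K \<Longrightarrow> pCons c p \<in> KP K"
  by (auto simp: KP_def coeff_pCons split: nat.split)
lemma KP_pCons_iff: "pCons c p \<in> KP K \<longleftrightarrow> c \<in> K \<and> p \<in> KP K"
  by (auto simp: KP_def coeff_pCons split: nat.split)
lemma KP_add: "sf K \<Longrightarrow> p \<in> KP K \<Longrightarrow> q \<in> KP K \<Longrightarrow> p + q \<in> KP K"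
  by (simp add: KP_def sf_add)
lemma KP_uminus: "sf K \<Longrightarrow> p \<in> KP K \<Longrightarrow> - p \<in> KP K"
  by (simp add: KP_def sf_uminus)
lemma KP_diff: "sf K \<Longrightarrow> p \<in> KP K \<Longrightarrow> q \<in> KP K \<Longrightarrow> p - q \<in> KP K"
  by (simp add: KP_def sf_diff)
lemma KP_mult: "sf K \<Longrightarrow> p \<in> KP K \<Longrightarrow> q \<in> KP K \<Longrightarrow> p * q \<in> KP K"
  by (simp add: KP_def coeff_mult sf_sum sf_mult)
lemma KP_smult: "sf K \<Longrightarrow> c \<in> K \<Longrightarrow> p \<in> KP K \<Longrightarrow> Polynomial.smult c p \<in> KP K"
  by (simp add: KP_def sf_mult)
lemma KP_monom: "sf K \<Longrightarrow> c \<in> K \<Longrightarrow> Polynomial.monom c k \<in> KP K"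
  by (simp add: KP_def coeff_monom sf_0)
lemma KP_pderiv: "sf K \<Longrightarrow> p \<in> KP K \<Longrightarrow> pderiv p \<in> KP K"
  by (simp add: KP_def coeff_pderiv sf_mult sf_of_nat sf_add sf_1)
lemma KP_mono: "K \<subseteq> L \<Longrightarrow> p \<in> KP K \<Longrightarrow> p \<in> KP L"
  by (auto simp: KP_def)
lemma KP_poly: "sf K \<Longrightarrow> p \<in> KP K \<Longrightarrow> x \<in> K \<Longrightarrow> poly p x \<in> K"
  by (induction p) (auto simp: KP_pCons_iff sf_add sf_mult sf_0)
lemma KP_pcompose: "sf K \<Longrightarrow> p \<in> KP K \<Longrightarrow> q \<in> KP K \<Longrightarrow> pcompose p q \<in> KP K"
  by (induction p) (auto simp: KP_pCons_iff pcompose_pCons intro!: KP_add KP_mult KP_const)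

lemma degree_less_lemma:
  fixes p :: "complex poly"
  assumes "Polynomial.degree p \<le> n" "Polynomial.coeff p n = 0" "p \<noteq> 0" shows "Polynomial.degree p < n"
  using assms by (metis le_neq_implies_less leading_coeff_0_iff)

lemma KP_divmod:
  assumes K: "sf K" and m: "m \<in> KP K" "m \<noteq> 0"
  shows "p \<in> KP K \<Longrightarrow> \<exists>q r. q \<in> KP K \<and> r \<in> KP K \<and> p = q * m + r \<and> (r = 0 \<or> Polynomial.degree r < Polynomial.degree m)"
proof (induction "Polynomial.degree p" arbitrary: p rule: less_induct)
  case less
  show ?case
  proof (cases "p = 0 \<or> Polynomial.degree p < Polynomial.degree m")
    case True
    then show ?thesis using less.prems KP_0[OF K] by (intro exI[of _ 0] exI[of _ p]) auto
  next
    case False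
    hence p0: "p \<noteq> 0" and dge: "Polynomial.degree m \<le> Polynomial.degree p" by auto
    define c where "c = Polynomial.lead_coeff p / Polynomial.lead_coeff m"
    define k where "k = Polynomial.degree p - Polynomial.degree m"
    define p' where "p' = p - Polynomial.monom c k * m"
    have cK: "c \<in> K" unfolding c_def using less.prems m by (simp add: KP_coeff K sf_divide)
    have c0: "c \<noteq> 0" using p0 m unfolding c_def by simp
    have dmon: "Polynomial.degree (Polynomial.monom c k * m) = Polynomial.degree p"
      using c0 m dge by (simp add: degree_mult_eq degree_monom_eq k_def)
    have cmon: "Polynomial.coeff (Polynomial.monom c k * m) (Polynomial.degree p) = Polynomial.lead_coeff p"
      using m dge by (simp add: coeff_monom_mult k_def c_def)
    have p'K: "p' \<in> KP K" unfolding p'_def using less.prems cK m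
      by (simp add: K KP_diff KP_mult KP_monom)
    have dp': "Polynomial.degree p' \<le> Polynomial.degree p" unfolding p'_def
      using degree_diff_le[of p "Polynomial.degree p" "Polynomial.monom c k * m"] dmon by simp
    have cp': "Polynomial.coeff p' (Polynomial.degree p) = 0" unfolding p'_def using cmon by simp
    show ?thesis
    proof (cases "p' = 0")
      case True
      hence "p = Polynomial.monom c k * m + 0" unfolding p'_def by simp
      then show ?thesis using KP_monom[OF K cK] KP_0[OF K] by blast
    next
      case False
      hence "Polynomial.degree p' < Polynomial.degree p" using degree_less_lemma[OF dp' cp'] by simp
      from less.hyps[OF this p'K] obtain q r where qr: "q \<in> KP K" "r \<in> KP K" "p' = q * m + r"
        "r = 0 \<or> Polynomial.degree r < Polynomial.degree m" by blast
      have "p = (q + Polynomial.monom c k) * m + r" using qr(3) unfolding p'_def by (simp add: algebra_simps)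
      then show ?thesis using qr KP_add[OF K qr(1) KP_monom[OF K cK]] by blast
    qed
  qed
qed

definition alg :: "complex set \<Rightarrow> complex \<Rightarrow> bool" where
  "alg K z \<longleftrightarrow> (\<exists>p\<in>KP K. p \<noteq> 0 \<and> poly p z = 0)"

definition minp :: "complex set \<Rightarrow> complex \<Rightarrow> complex poly \<Rightarrow> bool" where
  "minp K z m \<longleftrightarrow> m \<in> KP K \<and> m \<noteq> 0 \<and> poly m z = 0 \<and>
     (\<forall>p\<in>KP K. p \<noteq> 0 \<longrightarrow> poly p z = 0 \<longrightarrow> Polynomial.degree m \<le> Polynomial.degree p)"

lemma alg_mono: "K \<subseteq> L \<Longrightarrow> alg K z \<Longrightarrow> alg L z"
  unfolding alg_def using KP_mono by blast

lemma alg_self: "sf K \<Longrightarrow> z \<in> K \<Longrightarrow> alg K z"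
  unfolding alg_def by (intro bexI[of _ "[:-z,1:]"]) (auto simp: KP_pCons sf_uminus KP_1 one_pCons[symmetric] sf_1 KP_const)

lemma minp_ex: assumes "alg K z" shows "\<exists>m. minp K z m"
proof -
  define P where "P d \<longleftrightarrow> (\<exists>p\<in>KP K. p \<noteq> 0 \<and> poly p z = 0 \<and> Polynomial.degree p = d)" for d
  have "\<exists>d. P d" using assms unfolding alg_def P_def by blast
  then have "P (LEAST d. P d)" by (rule LeastI_ex)
  then obtain m where m: "m \<in> KP K" "m \<noteq> 0" "poly m z = 0" "Polynomial.degree m = (LEAST d. P d)"
    unfolding P_def by blast
  have "Polynomial.degree m \<le> Polynomial.degree p" if "p \<in> KP K" "p \<noteq> 0" "poly p z = 0" for p
    using m(4) that by (metis (mono_tags, lifting) Least_le P_def)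
  then show ?thesis using m unfolding minp_def by blast
qed

lemma minp_deg: "minp K z m \<Longrightarrow> Polynomial.degree m \<ge> 1"
proof (rule ccontr)
  assume mp: "minp K z m" and "\<not> 1 \<le> Polynomial.degree m"
  hence "Polynomial.degree m = 0" by simp
  then obtain c where c: "m = [:c:]" by (metis degree_eq_zeroE)
  have "m \<noteq> 0" "poly m z = 0" using mp unfolding minp_def by auto
  thus False using c by simp
qed

lemma minp_dvd:
  assumes K: "sf K" and mp: "minp K z m" and p: "p \<in> KP K" "poly p z = 0"
  shows "\<exists>s\<in>KP K. p = s * m"
proof -
  have m: "m \<in> KP K" "m \<noteq> 0" "poly m z = 0" using mp unfolding minp_def by auto
  obtain q r where qr: "q \<in> KP K" "r \<in> KP K" "p = q * m + r" "r = 0 \<or> Polynomial.degree r < Polynomial.degree m"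
    using KP_divmod[OF K m(1,2) p(1)] by blast
  have "poly r z = 0" using qr(3) p(2) m(3) by (simp add: poly_mult)
  hence "r = 0" using qr(2,4) mp unfolding minp_def by (meson not_less)
  then show ?thesis using qr by auto
qed

lemma minp_pderiv:
  assumes K: "sf K" and mp: "minp K z m" shows "poly (pderiv m) z \<noteq> 0"
proof
  assume h: "poly (pderiv m) z = 0"
  have m: "m \<in> KP K" using mp unfolding minp_def by auto
  have d: "Polynomial.degree m \<ge> 1" using minp_deg[OF mp] .
  have "pderiv m \<noteq> 0" using d by (simp add: pderiv_eq_0_iff)
  moreover have "pderiv m \<in> KP K" using KP_pderiv[OF K m] .
  ultimately have "Polynomial.degree m \<le> Polynomial.degree (pderiv m)" using mp h unfolding minp_def by blast
  moreover have "Polynomial.degree (pderiv m) = Polynomial.degree m - 1" by (rule degree_pderiv)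
  ultimately show False using d by simp
qed

lemma minp_inv_aux:
  assumes K: "sf K" and mp: "minp K z m"
  shows "r \<in> KP K \<Longrightarrow> poly r z \<noteq> 0 \<Longrightarrow> Polynomial.degree r < Polynomial.degree m \<Longrightarrow> \<exists>a\<in>KP K. poly a z * poly r z = 1"
proof (induction "Polynomial.degree r" arbitrary: r rule: less_induct)
  case less
  have m: "m \<in> KP K" "m \<noteq> 0" "poly m z = 0" using mp unfolding minp_def by auto
  show ?case
  proof (cases "Polynomial.degree r = 0")
    case True
    then obtain c where c: "r = [:c:]" by (metis degree_eq_zeroE)
    have "c \<in> K" using less.prems(1) c by (metis KP_coeff coeff_pCons_0)
    moreover have "c \<noteq> 0" using less.prems(2) c by simp
    ultimately show ?thesis using c by (intro bexI[of _ "[:inverse c:]"]) (auto simp: KP_const K sf_inverse)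
  next
    case False
    have r0: "r \<noteq> 0" using less.prems(2) by auto
    obtain q s where qs: "q \<in> KP K" "s \<in> KP K" "m = q * r + s" "s = 0 \<or> Polynomial.degree s < Polynomial.degree r"
      using KP_divmod[OF K less.prems(1) r0 m(1)] by blast
    have q0: "q \<noteq> 0"
    proof
      assume "q = 0"
      hence "m = s" using qs by simp
      thus False using qs(4) less.prems(3) m(2) by auto
    qed
    have dqr: "Polynomial.degree (q * r) = Polynomial.degree q + Polynomial.degree r" using q0 r0 by (rule degree_mult_eq)
    have "Polynomial.degree m = Polynomial.degree (q * r)"
    proof -
      have "Polynomial.degree s < Polynomial.degree (q * r)" if "s \<noteq> 0" using qs(4) that dqr by auto
      then show ?thesis using qs(3) by (metis add.right_neutral degree_add_eq_left)
    qed
    hence dq: "Polynomial.degree q < Polynomial.degree m" using dqr False by simp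
    have qz: "poly q z \<noteq> 0"
    proof
      assume "poly q z = 0"
      then have "Polynomial.degree m \<le> Polynomial.degree q" using mp qs(1) q0 unfolding minp_def by blast
      thus False using dq by simp
    qed
    have sz: "poly s z = - poly q z * poly r z" using qs(3) m(3) by (simp add: poly_mult eq_neg_iff_add_eq_0 add.commute)
    hence sz0: "poly s z \<noteq> 0" using qz less.prems(2) by simp
    hence "s \<noteq> 0" by auto
    hence dsr: "Polynomial.degree s < Polynomial.degree r" using qs(4) by auto
    have dsm: "Polynomial.degree s < Polynomial.degree m" using dsr less.prems(3) by simp
    obtain a where a: "a \<in> KP K" "poly a z * poly s z = 1"
      using less.hyps[OF dsr qs(2) sz0 dsm] by blast
    have "poly (- (a * q)) z * poly r z = poly a z * poly s z" using sz by (simp add: poly_mult)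
    also have "\<dots> = 1" using a(2) .
    finally have e: "poly (- (a * q)) z * poly r z = 1" .
    from e KP_uminus[OF K KP_mult[OF K a(1) qs(1)]] show ?thesis by (rule bexI)
  qed
qed

lemma minp_inv:
  assumes K: "sf K" and mp: "minp K z m" and p: "p \<in> KP K" "poly p z \<noteq> 0"
  shows "\<exists>a\<in>KP K. poly a z * poly p z = 1"
proof -
  have m: "m \<in> KP K" "m \<noteq> 0" "poly m z = 0" using mp unfolding minp_def by auto
  obtain q r where qr: "q \<in> KP K" "r \<in> KP K" "p = q * m + r" "r = 0 \<or> Polynomial.degree r < Polynomial.degree m"
    using KP_divmod[OF K m(1,2) p(1)] by blast
  have rz: "poly r z = poly p z" using qr(3) m(3) by (simp add: poly_mult)
  hence "r \<noteq> 0" using p(2) by auto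
  hence "Polynomial.degree r < Polynomial.degree m" using qr(4) by auto
  then obtain a where "a \<in> KP K" "poly a z * poly r z = 1" using minp_inv_aux[OF K mp qr(2)] rz p(2) by auto
  then show ?thesis using rz by auto
qed


definition addh :: "complex set \<Rightarrow> (complex \<Rightarrow> complex) \<Rightarrow> bool" where
  "addh K f \<longleftrightarrow> (\<forall>x\<in>K. \<forall>y\<in>K. f (x + y) = f x + f y)"

definition emb :: "complex set \<Rightarrow> (complex \<Rightarrow> complex) \<Rightarrow> bool" where
  "emb K f \<longleftrightarrow> sf K \<and> f 1 = 1 \<and> (\<forall>x\<in>K. \<forall>y\<in>K. f (x + y) = f x + f y \<and> f (x * y) = f x * f y)"

definition der :: "complex set \<Rightarrow> (complex \<Rightarrow> complex) \<Rightarrow> bool" where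
  "der K D \<longleftrightarrow> sf K \<and> (\<forall>x\<in>K. \<forall>y\<in>K. D (x + y) = D x + D y \<and> D (x * y) = x * D y + y * D x)"

lemma emb_sf: "emb K f \<Longrightarrow> sf K" by (simp add: emb_def)
lemma der_sf: "der K f \<Longrightarrow> sf K" by (simp add: der_def)
lemma emb_addh: "emb K f \<Longrightarrow> addh K f" by (simp add: emb_def addh_def)
lemma der_addh: "der K f \<Longrightarrow> addh K f" by (simp add: der_def addh_def)
lemma emb_add: "emb K f \<Longrightarrow> x \<in> K \<Longrightarrow> y \<in> K \<Longrightarrow> f (x + y) = f x + f y" by (simp add: emb_def)
lemma emb_mult: "emb K f \<Longrightarrow> x \<in> K \<Longrightarrow> y \<in> K \<Longrightarrow> f (x * y) = f x * f y" by (simp add: emb_def)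
lemma emb_1: "emb K f \<Longrightarrow> f 1 = 1" by (simp add: emb_def)
lemma der_add: "der K f \<Longrightarrow> x \<in> K \<Longrightarrow> y \<in> K \<Longrightarrow> f (x + y) = f x + f y" by (simp add: der_def)
lemma der_mult: "der K f \<Longrightarrow> x \<in> K \<Longrightarrow> y \<in> K \<Longrightarrow> f (x * y) = x * f y + y * f x" by (simp add: der_def)

lemma addh_0: assumes "sf K" "addh K f" shows "f 0 = 0"
  using assms(2) sf_0[OF assms(1)] unfolding addh_def by (metis add.right_neutral add_cancel_right_right)
lemma addh_uminus: assumes "sf K" "addh K f" "x \<in> K" shows "f (- x) = - f x"
proof -
  have "f (x + - x) = f x + f (- x)" using assms sf_uminus unfolding addh_def by blast
  thus ?thesis using addh_0[OF assms(1,2)] by (simp add: eq_neg_iff_add_eq_0 add.commute)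
qed
lemma addh_diff: assumes "sf K" "addh K f" "x \<in> K" "y \<in> K" shows "f (x - y) = f x - f y"
  using assms addh_uminus[OF assms(1,2) assms(4)] sf_uminus[OF assms(1) assms(4)]
  unfolding addh_def by (metis diff_conv_add_uminus)
lemma addh_sum: assumes "sf K" "addh K f" shows "(\<And>i. i \<in> A \<Longrightarrow> g i \<in> K) \<Longrightarrow> f (sum g A) = (\<Sum>i\<in>A. f (g i))"
proof (induction A rule: infinite_finite_induct)
  case (infinite A) then show ?case using addh_0[OF assms] by simp
next
  case empty then show ?case using addh_0[OF assms] by simp
next
  case (insert x F)
  have "sum g F \<in> K" using insert.prems by (intro sf_sum[OF assms(1)]) auto
  then show ?case using insert assms(2) unfolding addh_def by auto
qed

lemma emb_0: "emb K f \<Longrightarrow> f 0 = 0" using addh_0 emb_sf emb_addh by blast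
lemma der_0: "der K f \<Longrightarrow> f 0 = 0" using addh_0 der_sf der_addh by blast
lemma der_1: assumes "der K D" shows "D 1 = 0"
  using der_mult[OF assms sf_1[OF der_sf[OF assms]] sf_1[OF der_sf[OF assms]]] by simp

lemma emb_inverse: assumes "emb K f" "x \<in> K" shows "f (inverse x) = inverse (f x)"
proof (cases "x = 0")
  case True then show ?thesis using emb_0[OF assms(1)] by simp
next
  case False
  have "f x * f (inverse x) = 1" using emb_mult[OF assms(1) assms(2) sf_inverse[OF emb_sf[OF assms(1)] assms(2)]]
      emb_1[OF assms(1)] False by simp
  then show ?thesis by (metis inverse_unique)
qed

lemma emb_nz: assumes "emb K f" "x \<in> K" "x \<noteq> 0" shows "f x \<noteq> 0"
proof
  assume "f x = 0"
  have "f x * f (inverse x) = 1" using emb_mult[OF assms(1) assms(2) sf_inverse[OF emb_sf[OF assms(1)] assms(2)]]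
      emb_1[OF assms(1)] assms(3) by simp
  thus False using \<open>f x = 0\<close> by simp
qed

lemma emb_inj: assumes "emb K f" shows "inj_on f K"
proof (rule inj_onI)
  fix x y assume "x \<in> K" "y \<in> K" "f x = f y"
  hence "f (x - y) = 0" using addh_diff[OF emb_sf[OF assms] emb_addh[OF assms]] by simp
  thus "x = y" using emb_nz[OF assms] sf_diff[OF emb_sf[OF assms] \<open>x\<in>K\<close> \<open>y\<in>K\<close>] by (metis eq_iff_diff_eq_0)
qed

lemma emb_image_sf: assumes "emb K f" shows "sf (f ` K)"
proof -
  have K: "sf K" using emb_sf[OF assms] .
  show ?thesis unfolding sf_def
  proof (intro conjI ballI)
    show "0 \<in> f ` K" using emb_0[OF assms] sf_0[OF K] by (metis image_eqI)
    show "1 \<in> f ` K" using emb_1[OF assms] sf_1[OF K] by (metis image_eqI)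
    fix a b assume "a \<in> f ` K" "b \<in> f ` K"
    then obtain x y where xy: "x \<in> K" "y \<in> K" "a = f x" "b = f y" by blast
    show "a + b \<in> f ` K" using xy emb_add[OF assms xy(1,2)] sf_add[OF K xy(1,2)] by (metis image_eqI)
    show "a * b \<in> f ` K" using xy emb_mult[OF assms xy(1,2)] sf_mult[OF K xy(1,2)] by (metis image_eqI)
  next
    fix a assume "a \<in> f ` K"
    then obtain x where xy: "x \<in> K" "a = f x" by blast
    show "- a \<in> f ` K" using xy addh_uminus[OF K emb_addh[OF assms] xy(1)] sf_uminus[OF K xy(1)] by (metis image_eqI)
    show "inverse a \<in> f ` K" using xy emb_inverse[OF assms xy(1)] sf_inverse[OF K xy(1)] by (metis image_eqI)
  qed
qed

lemma mp_add: assumes "sf K" "addh K f" "p \<in> KP K" "q \<in> KP K"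
  shows "map_poly f (p + q) = map_poly f p + map_poly f q"
  using assms addh_0[OF assms(1,2)] by (intro poly_eqI) (simp add: coeff_map_poly addh_def KP_coeff)

lemma mp_uminus: assumes "sf K" "addh K f" "p \<in> KP K"
  shows "map_poly f (- p) = - map_poly f p"
  using assms addh_0[OF assms(1,2)] by (intro poly_eqI) (simp add: coeff_map_poly addh_uminus KP_coeff)

lemma mp_diff: assumes "sf K" "addh K f" "p \<in> KP K" "q \<in> KP K"
  shows "map_poly f (p - q) = map_poly f p - map_poly f q"
  using assms addh_0[OF assms(1,2)] by (intro poly_eqI) (simp add: coeff_map_poly addh_diff KP_coeff)

lemma mp_KP: assumes "f 0 = 0" "p \<in> KP K" shows "map_poly f p \<in> KP (f ` K)"
  using assms by (simp add: KP_def coeff_map_poly)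

lemma mp_const: "f 0 = 0 \<Longrightarrow> map_poly f [:c:] = [:f c:]"
  by (simp add: map_poly_pCons)

lemma mp_1: "f 0 = 0 \<Longrightarrow> f 1 = 1 \<Longrightarrow> map_poly f 1 = 1"
  by (simp add: one_pCons map_poly_pCons)

lemma mp_X: "f 0 = 0 \<Longrightarrow> f 1 = 1 \<Longrightarrow> map_poly f [:0,1:] = [:0,1:]"
  by (simp add: map_poly_pCons)

lemma mp_mult: assumes "emb K f" "p \<in> KP K" "q \<in> KP K"
  shows "map_poly f (p * q) = map_poly f p * map_poly f q"
proof (intro poly_eqI)
  fix n
  have K: "sf K" using emb_sf[OF assms(1)] .
  have f0: "f 0 = 0" using emb_0[OF assms(1)] .
  have "Polynomial.coeff (map_poly f (p * q)) n = f (\<Sum>i\<le>n. Polynomial.coeff p i * Polynomial.coeff q (n - i))"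
    by (simp add: coeff_map_poly f0 coeff_mult)
  also have "\<dots> = (\<Sum>i\<le>n. f (Polynomial.coeff p i * Polynomial.coeff q (n - i)))"
    by (rule addh_sum[OF K emb_addh[OF assms(1)]]) (use assms in \<open>auto intro: sf_mult[OF K] KP_coeff\<close>)
  also have "\<dots> = (\<Sum>i\<le>n. f (Polynomial.coeff p i) * f (Polynomial.coeff q (n - i)))"
    using emb_mult[OF assms(1)] assms KP_coeff by auto
  also have "\<dots> = Polynomial.coeff (map_poly f p * map_poly f q) n"
    by (simp add: coeff_mult coeff_map_poly f0)
  finally show "Polynomial.coeff (map_poly f (p * q)) n = Polynomial.coeff (map_poly f p * map_poly f q) n" .
qed

lemma mp_poly: assumes "emb K f" "x \<in> K"
  shows "p \<in> KP K \<Longrightarrow> f (poly p x) = poly (map_poly f p) (f x)"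
proof (induction p)
  case 0
  then show ?case using emb_0[OF assms(1)] by simp
next
  case (pCons a p)
  have K: "sf K" using emb_sf[OF assms(1)] .
  have a: "a \<in> K" and p: "p \<in> KP K" using pCons.prems by (auto simp: KP_pCons_iff)
  have px: "poly p x \<in> K" using KP_poly[OF K p assms(2)] .
  have "f (poly (pCons a p) x) = f a + f x * f (poly p x)"
    using emb_add[OF assms(1) a sf_mult[OF K assms(2) px]] emb_mult[OF assms(1) assms(2) px] by simp
  then show ?case using pCons.IH[OF p] by (simp add: map_poly_pCons emb_0[OF assms(1)])
qed

lemma mp_inj: assumes "emb K f" "p \<in> KP K" "map_poly f p = 0" shows "p = 0"
proof (intro poly_eqI)
  fix n
  have "f (Polynomial.coeff p n) = 0" using assms(3) by (metis coeff_0 coeff_map_poly emb_0[OF assms(1)])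
  thus "Polynomial.coeff p n = Polynomial.coeff 0 n" using emb_nz[OF assms(1) KP_coeff[OF assms(2)]] by auto
qed

lemma mp_surj: assumes "emb K f" "p' \<in> KP (f ` K)" shows "\<exists>p\<in>KP K. map_poly f p = p'"
proof -
  define g where "g = inv_into K f"
  have K: "sf K" using emb_sf[OF assms(1)] .
  have g0: "g 0 = 0"
  proof -
    have "0 \<in> f ` K" using emb_0[OF assms(1)] sf_0[OF K] by (metis image_eqI)
    hence "f (g 0) = 0" "g 0 \<in> K" unfolding g_def by (auto simp: f_inv_into_f inv_into_into)
    thus ?thesis using emb_nz[OF assms(1)] by blast
  qed
  have "map_poly g p' \<in> KP K" using assms(2) g0 unfolding KP_def g_def
    by (auto simp: coeff_map_poly inv_into_into)
  moreover have "map_poly f (map_poly g p') = p'"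
    using assms(2) g0 emb_0[OF assms(1)] unfolding KP_def g_def
    by (intro poly_eqI) (auto simp: coeff_map_poly f_inv_into_f)
  ultimately show ?thesis by blast
qed

lemma mp_der_mult: assumes "der K D" "p \<in> KP K" "q \<in> KP K"
  shows "map_poly D (p * q) = map_poly D p * q + p * map_poly D q"
proof (intro poly_eqI)
  fix n
  have K: "sf K" using der_sf[OF assms(1)] .
  have f0: "D 0 = 0" using der_0[OF assms(1)] .
  have "Polynomial.coeff (map_poly D (p * q)) n = D (\<Sum>i\<le>n. Polynomial.coeff p i * Polynomial.coeff q (n - i))"
    by (simp add: coeff_map_poly f0 coeff_mult)
  also have "\<dots> = (\<Sum>i\<le>n. D (Polynomial.coeff p i * Polynomial.coeff q (n - i)))"
    by (rule addh_sum[OF K der_addh[OF assms(1)]]) (use assms in \<open>auto intro: sf_mult[OF K] KP_coeff\<close>)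
  also have "\<dots> = (\<Sum>i\<le>n. D (Polynomial.coeff p i) * Polynomial.coeff q (n - i) + Polynomial.coeff p i * D (Polynomial.coeff q (n - i)))"
    using der_mult[OF assms(1)] assms KP_coeff by (auto simp: algebra_simps)
  also have "\<dots> = Polynomial.coeff (map_poly D p * q + p * map_poly D q) n"
    by (simp add: coeff_mult coeff_map_poly f0 sum.distrib)
  finally show "Polynomial.coeff (map_poly D (p * q)) n = Polynomial.coeff (map_poly D p * q + p * map_poly D q) n" .
qed

definition dl :: "(complex \<Rightarrow> complex) \<Rightarrow> complex \<Rightarrow> complex \<Rightarrow> complex poly \<Rightarrow> complex" where
  "dl D z w p = poly (map_poly D p) z + poly (pderiv p) z * w"

lemma dl_add: assumes "der K D" "p \<in> KP K" "q \<in> KP K" shows "dl D z w (p + q) = dl D z w p + dl D z w q"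
  unfolding dl_def using mp_add[OF der_sf[OF assms(1)] der_addh[OF assms(1)] assms(2,3)]
  by (simp add: pderiv_add algebra_simps)

lemma dl_mult: assumes "der K D" "p \<in> KP K" "q \<in> KP K"
  shows "dl D z w (p * q) = dl D z w p * poly q z + poly p z * dl D z w q"
  unfolding dl_def using mp_der_mult[OF assms]
  by (simp add: pderiv_mult poly_mult algebra_simps)

lemma dl_const: assumes "der K D" shows "dl D z w [:c:] = D c"
  unfolding dl_def using der_0[OF assms] by (simp add: mp_const)

lemma dl_X: assumes "der K D" shows "dl D z w [:0, 1:] = w"
  unfolding dl_def using der_0[OF assms] der_1[OF assms] by (simp add: map_poly_pCons pderiv_pCons)

lemma dl_1: assumes "der K D" shows "dl D z w 1 = 0"
  using dl_const[OF assms, of z w 1] der_1[OF assms] by (simp add: one_pCons)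


definition adj :: "complex set \<Rightarrow> complex \<Rightarrow> complex set" where
  "adj K z = {poly p z / poly q z | p q. p \<in> KP K \<and> q \<in> KP K \<and> poly q z \<noteq> 0}"

lemma adjI: "p \<in> KP K \<Longrightarrow> q \<in> KP K \<Longrightarrow> poly q z \<noteq> 0 \<Longrightarrow> poly p z / poly q z \<in> adj K z"
  unfolding adj_def by blast

lemma adjE: assumes "x \<in> adj K z"
  obtains p q where "p \<in> KP K" "q \<in> KP K" "poly q z \<noteq> 0" "x = poly p z / poly q z"
  using assms unfolding adj_def by blast

lemma adj_K: assumes "sf K" "x \<in> K" shows "x \<in> adj K z"
  using adjI[OF KP_const[OF assms] KP_1[OF assms(1)], of z] by simp

lemma adj_z: assumes "sf K" shows "z \<in> adj K z"
proof -
  have "[:0, 1:] \<in> KP K" using assms by (simp add: KP_pCons KP_const sf_0 sf_1)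
  from adjI[OF this KP_1[OF assms], of z] show ?thesis by simp
qed

lemma adj_sf: assumes K: "sf K" shows "sf (adj K z)"
  unfolding sf_def
proof (intro conjI ballI)
  show "0 \<in> adj K z" using adj_K[OF K sf_0[OF K]] .
  show "1 \<in> adj K z" using adj_K[OF K sf_1[OF K]] .
  fix x y assume x: "x \<in> adj K z" and y: "y \<in> adj K z"
  obtain p1 q1 where 1: "p1 \<in> KP K" "q1 \<in> KP K" "poly q1 z \<noteq> 0" "x = poly p1 z / poly q1 z" using adjE[OF x] .
  obtain p2 q2 where 2: "p2 \<in> KP K" "q2 \<in> KP K" "poly q2 z \<noteq> 0" "y = poly p2 z / poly q2 z" using adjE[OF y] .
  have e: "x + y = poly (p1 * q2 + p2 * q1) z / poly (q1 * q2) z"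
    using 1(3) 2(3) unfolding 1(4) 2(4) by (simp add: poly_mult field_simps)
  have "poly (p1 * q2 + p2 * q1) z / poly (q1 * q2) z \<in> adj K z"
    by (rule adjI) (use 1 2 in \<open>auto simp: K KP_add KP_mult poly_mult\<close>)
  then show "x + y \<in> adj K z" unfolding e .
  have e: "x * y = poly (p1 * p2) z / poly (q1 * q2) z"
    unfolding 1(4) 2(4) by (simp add: poly_mult)
  have "poly (p1 * p2) z / poly (q1 * q2) z \<in> adj K z"
    by (rule adjI) (use 1 2 in \<open>auto simp: K KP_add KP_mult poly_mult\<close>)
  then show "x * y \<in> adj K z" unfolding e .
next
  fix x assume x: "x \<in> adj K z"
  obtain p1 q1 where 1: "p1 \<in> KP K" "q1 \<in> KP K" "poly q1 z \<noteq> 0" "x = poly p1 z / poly q1 z" using adjE[OF x] .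
  have e: "- x = poly (- p1) z / poly q1 z" using 1 by simp
  have "poly (- p1) z / poly q1 z \<in> adj K z" by (rule adjI) (use 1 in \<open>auto simp: K KP_uminus\<close>)
  then show "- x \<in> adj K z" unfolding e .
  show "inverse x \<in> adj K z"
  proof (cases "poly p1 z = 0")
    case True
    then show ?thesis using 1 adj_K[OF K sf_0[OF K]] by simp
  next
    case False
    have "inverse x = poly q1 z / poly p1 z" using 1 by simp
    then show ?thesis using 1 False by (auto intro!: adjI)
  qed
qed

lemma adj_min: assumes "sf L" "K \<subseteq> L" "z \<in> L" shows "adj K z \<subseteq> L"
proof
  fix x assume "x \<in> adj K z"
  then obtain p q where "p \<in> KP K" "q \<in> KP K" "poly q z \<noteq> 0" "x = poly p z / poly q z" by (rule adjE)
  then show "x \<in> L" using assms by (metis KP_mono KP_poly sf_divide)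
qed

definition rep :: "complex set \<Rightarrow> complex \<Rightarrow> complex \<Rightarrow> complex poly \<times> complex poly" where
  "rep K z x = (SOME pq. fst pq \<in> KP K \<and> snd pq \<in> KP K \<and> poly (snd pq) z \<noteq> 0 \<and> x = poly (fst pq) z / poly (snd pq) z)"

lemma rep: assumes "x \<in> adj K z"
  shows "fst (rep K z x) \<in> KP K \<and> snd (rep K z x) \<in> KP K \<and> poly (snd (rep K z x)) z \<noteq> 0 \<and>
    x = poly (fst (rep K z x)) z / poly (snd (rep K z x)) z"
proof -
  obtain p q where "p \<in> KP K" "q \<in> KP K" "poly q z \<noteq> 0" "x = poly p z / poly q z" using adjE[OF assms] .
  then have "\<exists>pq. fst pq \<in> KP K \<and> snd pq \<in> KP K \<and> poly (snd pq) z \<noteq> 0 \<and> x = poly (fst pq) z / poly (snd pq) z"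
    by (intro exI[of _ "(p, q)"]) auto
  then show ?thesis unfolding rep_def by (rule someI_ex)
qed

subsection \<open>Extension of embeddings\<close>

definition condC :: "complex set \<Rightarrow> (complex \<Rightarrow> complex) \<Rightarrow> complex \<Rightarrow> complex \<Rightarrow> bool" where
  "condC K f z w \<longleftrightarrow> (\<forall>p\<in>KP K. poly p z = 0 \<longleftrightarrow> poly (map_poly f p) w = 0)"

definition ext :: "complex set \<Rightarrow> (complex \<Rightarrow> complex) \<Rightarrow> complex \<Rightarrow> complex \<Rightarrow> complex \<Rightarrow> complex" where
  "ext K f z w x = poly (map_poly f (fst (rep K z x))) w / poly (map_poly f (snd (rep K z x))) w"

lemma ext_eq:
  assumes f: "emb K f" and C: "condC K f z w" and pq: "p \<in> KP K" "q \<in> KP K" "poly q z \<noteq> 0"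
  shows "ext K f z w (poly p z / poly q z) = poly (map_poly f p) w / poly (map_poly f q) w"
proof -
  have K: "sf K" using emb_sf[OF f] .
  define x where "x = poly p z / poly q z"
  have xa: "x \<in> adj K z" unfolding x_def using adjI[OF pq] .
  define p' where "p' = fst (rep K z x)"
  define q' where "q' = snd (rep K z x)"
  have r: "p' \<in> KP K" "q' \<in> KP K" "poly q' z \<noteq> 0" "x = poly p' z / poly q' z"
    using rep[OF xa] unfolding p'_def q'_def by auto
  have "poly (p * q' - p' * q) z = 0" using r pq(3) unfolding x_def by (simp add: poly_mult field_simps)
  moreover have "p * q' - p' * q \<in> KP K" using r pq by (simp add: K KP_diff KP_mult)
  ultimately have "poly (map_poly f (p * q' - p' * q)) w = 0" using C unfolding condC_def by blast
  hence e: "poly (map_poly f p) w * poly (map_poly f q') w = poly (map_poly f p') w * poly (map_poly f q) w"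
    using mp_diff[OF K emb_addh[OF f] KP_mult[OF K pq(1) r(2)] KP_mult[OF K r(1) pq(2)]]
      mp_mult[OF f pq(1) r(2)] mp_mult[OF f r(1) pq(2)] by (simp add: poly_mult)
  have nz: "poly (map_poly f q) w \<noteq> 0" "poly (map_poly f q') w \<noteq> 0"
    using C pq r unfolding condC_def by auto
  have "ext K f z w x = poly (map_poly f p') w / poly (map_poly f q') w"
    unfolding ext_def p'_def q'_def ..
  also have "\<dots> = poly (map_poly f p) w / poly (map_poly f q) w" using e nz by (simp add: field_simps)
  finally show ?thesis unfolding x_def .
qed

lemma ext_emb:
  assumes f: "emb K f" and C: "condC K f z w"
  shows "emb (adj K z) (ext K f z w)"
proof -
  have K: "sf K" using emb_sf[OF f] .
  have f0: "f 0 = 0" using emb_0[OF f] .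
  have f1: "f 1 = 1" using emb_1[OF f] .
  have nz: "poly (map_poly f q) w \<noteq> 0" if "q \<in> KP K" "poly q z \<noteq> 0" for q
    using C that unfolding condC_def by auto
  note EQ = ext_eq[OF f C]
  show ?thesis unfolding emb_def
  proof (intro conjI ballI)
    show "sf (adj K z)" using adj_sf[OF K] .
    show "ext K f z w 1 = 1" using EQ[OF KP_1[OF K] KP_1[OF K]] by (simp add: mp_1[OF f0 f1])
    fix x y assume x: "x \<in> adj K z" and y: "y \<in> adj K z"
    obtain p1 q1 where 1: "p1 \<in> KP K" "q1 \<in> KP K" "poly q1 z \<noteq> 0" "x = poly p1 z / poly q1 z" using adjE[OF x] .
    obtain p2 q2 where 2: "p2 \<in> KP K" "q2 \<in> KP K" "poly q2 z \<noteq> 0" "y = poly p2 z / poly q2 z" using adjE[OF y] .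
    have n1: "poly (map_poly f q1) w \<noteq> 0" using nz 1 by auto
    have n2: "poly (map_poly f q2) w \<noteq> 0" using nz 2 by auto
    have ex: "ext K f z w x = poly (map_poly f p1) w / poly (map_poly f q1) w" using EQ[OF 1(1-3)] 1(4) by simp
    have ey: "ext K f z w y = poly (map_poly f p2) w / poly (map_poly f q2) w" using EQ[OF 2(1-3)] 2(4) by simp
    have "x + y = poly (p1 * q2 + p2 * q1) z / poly (q1 * q2) z"
      using 1(3) 2(3) unfolding 1(4) 2(4) by (simp add: poly_mult field_simps)
    hence "ext K f z w (x + y) = poly (map_poly f (p1 * q2 + p2 * q1)) w / poly (map_poly f (q1 * q2)) w"
      using EQ[of "p1 * q2 + p2 * q1" "q1 * q2"] 1 2 by (simp add: KP_add KP_mult K poly_mult)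
    also have "\<dots> = ext K f z w x + ext K f z w y"
      unfolding ex ey using 1(1,2) 2(1,2) n1 n2
      by (simp add: mp_add[OF K emb_addh[OF f]] mp_mult[OF f] KP_mult K poly_mult field_simps)
    finally show "ext K f z w (x + y) = ext K f z w x + ext K f z w y" .
    have "x * y = poly (p1 * p2) z / poly (q1 * q2) z"
      unfolding 1(4) 2(4) by (simp add: poly_mult)
    hence "ext K f z w (x * y) = poly (map_poly f (p1 * p2)) w / poly (map_poly f (q1 * q2)) w"
      using EQ[of "p1 * p2" "q1 * q2"] 1 2 by (simp add: KP_add KP_mult K poly_mult)
    also have "\<dots> = ext K f z w x * ext K f z w y"
      unfolding ex ey using 1(1,2) 2(1,2) n1 n2
      by (simp add: mp_mult[OF f] poly_mult)
    finally show "ext K f z w (x * y) = ext K f z w x * ext K f z w y" .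
  qed
qed

lemma ext_K: assumes f: "emb K f" and C: "condC K f z w" and x: "x \<in> K"
  shows "ext K f z w x = f x"
proof -
  have K: "sf K" using emb_sf[OF f] .
  have "ext K f z w (poly [:x:] z / poly 1 z) = poly (map_poly f [:x:]) w / poly (map_poly f 1) w"
    using ext_eq[OF f C KP_const[OF K x] KP_1[OF K]] by simp
  then show ?thesis by (simp add: mp_const emb_0[OF f] mp_1 emb_1[OF f])
qed

lemma ext_z: assumes f: "emb K f" and C: "condC K f z w"
  shows "ext K f z w z = w"
proof -
  have K: "sf K" using emb_sf[OF f] .
  have X: "[:0, 1:] \<in> KP K" using K by (simp add: KP_pCons KP_const sf_0 sf_1)
  have "ext K f z w (poly [:0,1:] z / poly 1 z) = poly (map_poly f [:0,1:]) w / poly (map_poly f 1) w"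
    using ext_eq[OF f C X KP_1[OF K]] by simp
  then show ?thesis by (simp add: mp_X emb_0[OF f] mp_1 emb_1[OF f])
qed

lemma ext_image: assumes f: "emb K f" and C: "condC K f z w"
  shows "ext K f z w ` adj K z = adj (f ` K) w"
proof
  have K: "sf K" using emb_sf[OF f] .
  show "ext K f z w ` adj K z \<subseteq> adj (f ` K) w"
  proof
    fix y assume "y \<in> ext K f z w ` adj K z"
    then obtain x where x: "x \<in> adj K z" "y = ext K f z w x" by blast
    obtain p q where 1: "p \<in> KP K" "q \<in> KP K" "poly q z \<noteq> 0" "x = poly p z / poly q z" using adjE[OF x(1)] .
    have "y = poly (map_poly f p) w / poly (map_poly f q) w" using x 1 ext_eq[OF f C] by simp
    moreover have "poly (map_poly f q) w \<noteq> 0" using C 1 unfolding condC_def by auto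
    ultimately show "y \<in> adj (f ` K) w" using mp_KP[where f=f, OF emb_0[OF f]] 1 by (auto intro!: adjI)
  qed
  show "adj (f ` K) w \<subseteq> ext K f z w ` adj K z"
  proof
    fix y assume "y \<in> adj (f ` K) w"
    then obtain p' q' where 1: "p' \<in> KP (f ` K)" "q' \<in> KP (f ` K)" "poly q' w \<noteq> 0" "y = poly p' w / poly q' w"
      by (rule adjE)
    obtain p where p: "p \<in> KP K" "map_poly f p = p'" using mp_surj[OF f 1(1)] by blast
    obtain q where q: "q \<in> KP K" "map_poly f q = q'" using mp_surj[OF f 1(2)] by blast
    have qz: "poly q z \<noteq> 0" using C q 1(3) unfolding condC_def by auto
    have "y = ext K f z w (poly p z / poly q z)" using ext_eq[OF f C p(1) q(1) qz] p q 1 by simp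
    then show "y \<in> ext K f z w ` adj K z" using adjI[OF p(1) q(1) qz] by blast
  qed
qed

lemma condC_trans:
  assumes f: "emb K f" and z: "\<not> alg K z" and w: "\<not> alg (f ` K) w"
  shows "condC K f z w"
  unfolding condC_def
proof
  fix p assume p: "p \<in> KP K"
  have "poly p z = 0 \<longleftrightarrow> p = 0" using z p unfolding alg_def by auto
  also have "\<dots> \<longleftrightarrow> map_poly f p = 0" using mp_inj[OF f p] by auto
  also have "\<dots> \<longleftrightarrow> poly (map_poly f p) w = 0" using w mp_KP[where f=f, OF emb_0[OF f] p] unfolding alg_def by auto
  finally show "poly p z = 0 \<longleftrightarrow> poly (map_poly f p) w = 0" .
qed

lemma condC_alg:
  assumes f: "emb K f" and mp: "minp K z m" and w: "poly (map_poly f m) w = 0"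
  shows "condC K f z w"
  unfolding condC_def
proof
  have K: "sf K" using emb_sf[OF f] .
  have fwd: "poly (map_poly f p) w = 0" if p: "p \<in> KP K" "poly p z = 0" for p
  proof -
    obtain s where s: "s \<in> KP K" "p = s * m" using minp_dvd[OF K mp p] by blast
    have m: "m \<in> KP K" using mp unfolding minp_def by auto
    show ?thesis using s w mp_mult[OF f s(1) m] by (simp add: poly_mult)
  qed
  fix p assume p: "p \<in> KP K"
  show "poly p z = 0 \<longleftrightarrow> poly (map_poly f p) w = 0"
  proof
    assume "poly p z = 0" then show "poly (map_poly f p) w = 0" using fwd p by blast
  next
    assume h: "poly (map_poly f p) w = 0"
    show "poly p z = 0"
    proof (rule ccontr)
      assume "poly p z \<noteq> 0"
      then obtain a where a: "a \<in> KP K" "poly a z * poly p z = 1" using minp_inv[OF K mp p] by blast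
      have ap: "a * p - 1 \<in> KP K" using a p by (simp add: K KP_diff KP_mult KP_1)
      have "poly (a * p - 1) z = 0" using a by (simp add: poly_mult)
      hence "poly (map_poly f (a * p - 1)) w = 0" using fwd ap by blast
      hence "poly (map_poly f a) w * poly (map_poly f p) w = 1"
        using mp_diff[OF K emb_addh[OF f] KP_mult[OF K a(1) p] KP_1[OF K]] mp_mult[OF f a(1) p]
          mp_1[OF emb_0[OF f] emb_1[OF f]] by (simp add: poly_mult)
      thus False using h by simp
    qed
  qed
qed

lemma alg_root_exists:
  assumes f: "emb K f" and mp: "minp K z m" shows "\<exists>w. poly (map_poly f m) w = 0"
proof -
  have m: "m \<in> KP K" "m \<noteq> 0" using mp unfolding minp_def by auto
  have "Polynomial.lead_coeff m \<in> K" using m KP_coeff by blast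
  hence "f (Polynomial.lead_coeff m) \<noteq> 0" using emb_nz[OF f] m by auto
  hence "Polynomial.degree (map_poly f m) = Polynomial.degree m" by (rule map_poly_degree_eq)
  hence "\<not> constant (poly (map_poly f m))" using minp_deg[OF mp] by (simp add: constant_degree)
  then show ?thesis by (rule fundamental_theorem_of_algebra)
qed

subsection \<open>Extension of derivations\<close>

definition condD :: "complex set \<Rightarrow> (complex \<Rightarrow> complex) \<Rightarrow> complex \<Rightarrow> complex \<Rightarrow> bool" where
  "condD K D z w \<longleftrightarrow> (\<forall>p\<in>KP K. poly p z = 0 \<longrightarrow> dl D z w p = 0)"

definition dext :: "complex set \<Rightarrow> (complex \<Rightarrow> complex) \<Rightarrow> complex \<Rightarrow> complex \<Rightarrow> complex \<Rightarrow> complex" where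
  "dext K D z w x = (dl D z w (fst (rep K z x)) * poly (snd (rep K z x)) z
       - poly (fst (rep K z x)) z * dl D z w (snd (rep K z x))) / (poly (snd (rep K z x)) z)^2"

lemma quot_rule_wd:
  fixes Xa Y U V a b c d :: complex
  assumes "Y \<noteq> 0" "V \<noteq> 0" "Xa * V = U * Y" "a * V + Xa * d = c * Y + U * b"
  shows "(a * Y - Xa * b) / Y^2 = (c * V - U * d) / V^2"
proof -
  have "a * V - U * b = c * Y - Xa * d" using assms(4) by (simp add: algebra_simps)
  hence "V * (a * V - U * b) = V * (c * Y - Xa * d)" by simp
  also have "\<dots> = Y * (c * V - U * d)" using assms(3) by (simp add: algebra_simps)
  finally have e: "V * (a * V - U * b) = Y * (c * V - U * d)" .
  have "(a*Y - Xa*b)*V^2 = a*Y*V*V - (Xa*V)*b*V" by (simp add: power2_eq_square algebra_simps)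
  also have "\<dots> = a*Y*V*V - (U*Y)*b*V" using assms(3) by simp
  also have "\<dots> = Y*(V*(a*V - U*b))" by (simp add: algebra_simps)
  also have "\<dots> = Y*(Y*(c*V - U*d))" using e by simp
  also have "\<dots> = (c*V - U*d)*Y^2" by (simp add: power2_eq_square algebra_simps)
  finally have "(a * Y - Xa * b) * V^2 = (c * V - U * d) * Y^2" .
  then show ?thesis using assms(1,2) by (simp add: field_simps)
qed

lemma dl_diff: assumes "der K D" "p \<in> KP K" "q \<in> KP K" shows "dl D z w (p - q) = dl D z w p - dl D z w q"
  unfolding dl_def mp_diff[OF der_sf[OF assms(1)] der_addh[OF assms(1)] assms(2,3)]
  by (simp add: pderiv_diff poly_diff algebra_simps)

lemma dext_eq:
  assumes D: "der K D" and C: "condD K D z w" and pq: "p \<in> KP K" "q \<in> KP K" "poly q z \<noteq> 0"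
  shows "dext K D z w (poly p z / poly q z) = (dl D z w p * poly q z - poly p z * dl D z w q) / (poly q z)^2"
proof -
  have K: "sf K" using der_sf[OF D] .
  define x where "x = poly p z / poly q z"
  have xa: "x \<in> adj K z" unfolding x_def using adjI[OF pq] .
  define p' where "p' = fst (rep K z x)"
  define q' where "q' = snd (rep K z x)"
  have r: "p' \<in> KP K" "q' \<in> KP K" "poly q' z \<noteq> 0" "x = poly p' z / poly q' z"
    using rep[OF xa] unfolding p'_def q'_def by auto
  have e1: "poly p z * poly q' z = poly p' z * poly q z" using r pq(3) unfolding x_def by (simp add: field_simps)
  have "poly (p * q' - p' * q) z = 0" using e1 by (simp add: poly_mult)
  moreover have "p * q' - p' * q \<in> KP K" using r pq by (simp add: K KP_diff KP_mult)
  ultimately have "dl D z w (p * q' - p' * q) = 0" using C unfolding condD_def by blast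
  then have e2: "dl D z w (p * q') = dl D z w (p' * q)"
    using dl_diff[OF D KP_mult[OF K pq(1) r(2)] KP_mult[OF K r(1) pq(2)]] by simp
  have e3: "dl D z w p * poly q' z + poly p z * dl D z w q' = dl D z w p' * poly q z + poly p' z * dl D z w q"
    using e2 dl_mult[OF D pq(1) r(2)] dl_mult[OF D r(1) pq(2)] by simp
  have "dext K D z w x = (dl D z w p' * poly q' z - poly p' z * dl D z w q') / (poly q' z)^2"
    unfolding dext_def p'_def q'_def ..
  also have "\<dots> = (dl D z w p * poly q z - poly p z * dl D z w q) / (poly q z)^2"
    by (rule quot_rule_wd[symmetric]) (use pq(3) r(3) e1 e3 in auto)
  finally show ?thesis unfolding x_def .
qed

lemma dext_der:
  assumes D: "der K D" and C: "condD K D z w"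
  shows "der (adj K z) (dext K D z w)"
proof -
  have K: "sf K" using der_sf[OF D] .
  note EQ = dext_eq[OF D C]
  show ?thesis unfolding der_def
  proof (intro conjI ballI)
    show "sf (adj K z)" using adj_sf[OF K] .
    fix x y assume x: "x \<in> adj K z" and y: "y \<in> adj K z"
    obtain p1 q1 where 1: "p1 \<in> KP K" "q1 \<in> KP K" "poly q1 z \<noteq> 0" "x = poly p1 z / poly q1 z" using adjE[OF x] .
    obtain p2 q2 where 2: "p2 \<in> KP K" "q2 \<in> KP K" "poly q2 z \<noteq> 0" "y = poly p2 z / poly q2 z" using adjE[OF y] .
    define X1 where "X1 = poly p1 z"
    define Y1 where "Y1 = poly q1 z"
    define X2 where "X2 = poly p2 z"
    define Y2 where "Y2 = poly q2 z"
    define a1 where "a1 = dl D z w p1"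
    define b1 where "b1 = dl D z w q1"
    define a2 where "a2 = dl D z w p2"
    define b2 where "b2 = dl D z w q2"
    have Y1: "Y1 \<noteq> 0" and Y2: "Y2 \<noteq> 0" using 1 2 unfolding Y1_def Y2_def by auto
    have Dx: "dext K D z w x = (a1 * Y1 - X1 * b1) / Y1^2" using EQ[OF 1(1-3)] 1(4) unfolding a1_def b1_def X1_def Y1_def by simp
    have Dy: "dext K D z w y = (a2 * Y2 - X2 * b2) / Y2^2" using EQ[OF 2(1-3)] 2(4) unfolding a2_def b2_def X2_def Y2_def by simp
    have s: "x + y = poly (p1 * q2 + p2 * q1) z / poly (q1 * q2) z"
      using 1(3) 2(3) unfolding 1(4) 2(4) by (simp add: poly_mult field_simps)
    have ps: "p1 * q2 + p2 * q1 \<in> KP K" "q1 * q2 \<in> KP K" using 1 2 by (auto simp: K KP_add KP_mult)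
    have dls: "dl D z w (p1 * q2 + p2 * q1) = a1 * Y2 + X1 * b2 + (a2 * Y1 + X2 * b1)"
      using dl_add[OF D KP_mult[OF K 1(1) 2(2)] KP_mult[OF K 2(1) 1(2)]] dl_mult[OF D 1(1) 2(2)] dl_mult[OF D 2(1) 1(2)]
      unfolding a1_def b1_def a2_def b2_def X1_def X2_def Y1_def Y2_def by simp
    have dlq: "dl D z w (q1 * q2) = b1 * Y2 + Y1 * b2"
      using dl_mult[OF D 1(2) 2(2)] unfolding b1_def b2_def Y1_def Y2_def by simp
    have "dext K D z w (x + y) = (dl D z w (p1 * q2 + p2 * q1) * poly (q1 * q2) z
        - poly (p1 * q2 + p2 * q1) z * dl D z w (q1 * q2)) / (poly (q1 * q2) z)^2"
      using s EQ[OF ps] 1 2 by (simp add: poly_mult)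
    also have "\<dots> = ((a1 * Y2 + X1 * b2 + (a2 * Y1 + X2 * b1)) * (Y1 * Y2) - (X1 * Y2 + X2 * Y1) * (b1 * Y2 + Y1 * b2)) / (Y1 * Y2)^2"
      unfolding dls dlq by (simp add: poly_mult X1_def X2_def Y1_def Y2_def)
    also have "\<dots> = dext K D z w x + dext K D z w y" unfolding Dx Dy using Y1 Y2
      by (simp add: field_simps power2_eq_square)
    finally show "dext K D z w (x + y) = dext K D z w x + dext K D z w y" .
    have m: "x * y = poly (p1 * p2) z / poly (q1 * q2) z"
      unfolding 1(4) 2(4) by (simp add: poly_mult)
    have pm: "p1 * p2 \<in> KP K" using 1 2 by (auto simp: K KP_mult)
    have dlm: "dl D z w (p1 * p2) = a1 * X2 + X1 * a2"
      using dl_mult[OF D 1(1) 2(1)] unfolding a1_def a2_def X1_def X2_def by simp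
    have "dext K D z w (x * y) = (dl D z w (p1 * p2) * poly (q1 * q2) z
        - poly (p1 * p2) z * dl D z w (q1 * q2)) / (poly (q1 * q2) z)^2"
      using m EQ[OF pm ps(2)] 1 2 by (simp add: poly_mult)
    also have "\<dots> = ((a1 * X2 + X1 * a2) * (Y1 * Y2) - (X1 * X2) * (b1 * Y2 + Y1 * b2)) / (Y1 * Y2)^2"
      unfolding dlm dlq by (simp add: poly_mult X1_def X2_def Y1_def Y2_def)
    also have "\<dots> = x * dext K D z w y + y * dext K D z w x" unfolding Dx Dy unfolding 1(4) 2(4)
      unfolding X1_def[symmetric] X2_def[symmetric] Y1_def[symmetric] Y2_def[symmetric] using Y1 Y2
      by (simp add: field_simps power2_eq_square)
    finally show "dext K D z w (x * y) = x * dext K D z w y + y * dext K D z w x" .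
  qed
qed

lemma dext_K: assumes D: "der K D" and C: "condD K D z w" and x: "x \<in> K"
  shows "dext K D z w x = D x"
proof -
  have K: "sf K" using der_sf[OF D] .
  have "dext K D z w (poly [:x:] z / poly 1 z) = (dl D z w [:x:] * poly 1 z - poly [:x:] z * dl D z w 1) / (poly 1 z)^2"
    using dext_eq[OF D C KP_const[OF K x] KP_1[OF K]] by simp
  moreover have "poly [:x:] z / poly 1 z = x" "poly 1 z = 1" "poly [:x:] z = x" by simp_all
  moreover have "dl D z w [:x:] = D x" "dl D z w 1 = 0" using dl_const[OF D] dl_1[OF D] by blast+
  ultimately show ?thesis by (metis diff_zero div_by_1 mult_1_right mult_zero_right power_one)
qed

lemma dext_z: assumes D: "der K D" and C: "condD K D z w"
  shows "dext K D z w z = w"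
proof -
  have K: "sf K" using der_sf[OF D] .
  have X: "[:0, 1:] \<in> KP K" using K by (simp add: KP_pCons KP_const sf_0 sf_1)
  have "dext K D z w (poly [:0,1:] z / poly 1 z) = (dl D z w [:0,1:] * poly 1 z - poly [:0,1:] z * dl D z w 1) / (poly 1 z)^2"
    using dext_eq[OF D C X KP_1[OF K]] by simp
  moreover have "poly [:0,1:] z / poly 1 z = z" "poly 1 z = 1" "poly [:0,1:] z = z" by simp_all
  moreover have "dl D z w [:0,1:] = w" "dl D z w 1 = 0" using dl_X[OF D] dl_1[OF D] by blast+
  ultimately show ?thesis by (metis diff_zero div_by_1 mult_1_right mult_zero_right power_one)
qed

lemma condD_trans: assumes "\<not> alg K z" shows "condD K D z w"
  using assms unfolding condD_def alg_def dl_def by auto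

lemma condD_alg:
  assumes D: "der K D" and mp: "minp K z m"
  shows "condD K D z (- poly (map_poly D m) z / poly (pderiv m) z)"
  unfolding condD_def
proof (intro ballI impI)
  have K: "sf K" using der_sf[OF D] .
  define w where "w = - poly (map_poly D m) z / poly (pderiv m) z"
  have m: "m \<in> KP K" using mp unfolding minp_def by auto
  have dm: "dl D z w m = 0" unfolding dl_def w_def using minp_pderiv[OF K mp] by simp
  fix p assume p: "p \<in> KP K" "poly p z = 0"
  obtain s where s: "s \<in> KP K" "p = s * m" using minp_dvd[OF K mp p] by blast
  have "dl D z w p = 0" using dl_mult[OF D s(1) m] s(2) dm mp unfolding minp_def by simp
  then show "dl D z w p = 0" unfolding w_def .
qed


definition fg :: "(complex \<times> complex) set \<Rightarrow> complex \<Rightarrow> complex" where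
  "fg G x = (SOME y. (x, y) \<in> G)"
definition fnl :: "(complex \<times> complex) set \<Rightarrow> bool" where
  "fnl G \<longleftrightarrow> (\<forall>x y y'. (x, y) \<in> G \<longrightarrow> (x, y') \<in> G \<longrightarrow> y = y')"
definition gr :: "complex set \<Rightarrow> (complex \<Rightarrow> complex) \<Rightarrow> (complex \<times> complex) set" where
  "gr K f = {(x, f x) | x. x \<in> K}"

lemma fg_mem: "fnl G \<Longrightarrow> (x, y) \<in> G \<Longrightarrow> fg G x = y"
  unfolding fg_def fnl_def by (metis (mono_tags, lifting) someI)
lemma fg_in: "x \<in> Domain G \<Longrightarrow> (x, fg G x) \<in> G"
  unfolding fg_def by (metis DomainE someI)
lemma gr_fnl: "fnl (gr K f)" unfolding fnl_def gr_def by auto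
lemma gr_Domain: "Domain (gr K f) = K" unfolding gr_def by auto
lemma gr_fg: "x \<in> K \<Longrightarrow> fg (gr K f) x = f x"
  using fg_mem[OF gr_fnl, of x "f x" K f] unfolding gr_def by auto

lemma emb_cong: "emb K f \<Longrightarrow> (\<And>x. x \<in> K \<Longrightarrow> g x = f x) \<Longrightarrow> emb K g"
  unfolding emb_def by (auto simp: sf_add sf_mult sf_1)
lemma der_cong: "der K f \<Longrightarrow> (\<And>x. x \<in> K \<Longrightarrow> g x = f x) \<Longrightarrow> der K g"
  unfolding der_def by (auto simp: sf_add sf_mult sf_1)

lemma chain_fnl: assumes "chain\<^sub>\<subseteq> C" "\<forall>G\<in>C. fnl G" shows "fnl (\<Union>C)"
  unfolding fnl_def
proof (intro allI impI)
  fix x y y' assume "(x, y) \<in> \<Union>C" "(x, y') \<in> \<Union>C"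
  then obtain G1 G2 where G: "G1 \<in> C" "G2 \<in> C" "(x, y) \<in> G1" "(x, y') \<in> G2" by blast
  have "G1 \<subseteq> G2 \<or> G2 \<subseteq> G1" using assms(1) G(1,2) unfolding chain_subset_def by blast
  then show "y = y'"
  proof
    assume "G1 \<subseteq> G2"
    then have "(x, y) \<in> G2" using G(3) by blast
    then show ?thesis using G(2,4) assms(2) unfolding fnl_def by blast
  next
    assume "G2 \<subseteq> G1"
    then have "(x, y') \<in> G1" using G(4) by blast
    then show ?thesis using G(1,3) assms(2) unfolding fnl_def by blast
  qed
qed

lemma chain_fg: assumes "chain\<^sub>\<subseteq> C" "\<forall>G\<in>C. fnl G" "G \<in> C" "x \<in> Domain G"
  shows "fg (\<Union>C) x = fg G x"
  using fg_mem[OF chain_fnl[OF assms(1,2)]] fg_in[OF assms(4)] assms(3) by blast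

lemma chain_two: assumes "chain\<^sub>\<subseteq> C" "x \<in> Domain (\<Union>C)" "y \<in> Domain (\<Union>C)"
  shows "\<exists>G\<in>C. x \<in> Domain G \<and> y \<in> Domain G"
proof -
  obtain G1 G2 where "G1 \<in> C" "G2 \<in> C" "x \<in> Domain G1" "y \<in> Domain G2" using assms(2,3) by blast
  then show ?thesis using assms(1) unfolding chain_subset_def by (metis Domain_mono subsetD)
qed

lemma chain_sf: assumes "chain\<^sub>\<subseteq> C" "C \<noteq> {}" "\<forall>G\<in>C. sf (Domain G)" shows "sf (Domain (\<Union>C))"
  unfolding sf_def
proof (intro conjI ballI)
  obtain G where G: "G \<in> C" using assms(2) by blast
  show "0 \<in> Domain (\<Union>C)" using G assms(3) sf_0 by blast
  show "1 \<in> Domain (\<Union>C)" using G assms(3) sf_1 by blast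
  fix x y assume "x \<in> Domain (\<Union>C)" "y \<in> Domain (\<Union>C)"
  then obtain G where G: "G \<in> C" "x \<in> Domain G" "y \<in> Domain G" using chain_two[OF assms(1)] by blast
  show "x + y \<in> Domain (\<Union>C)" using G assms(3) sf_add by blast
  show "x * y \<in> Domain (\<Union>C)" using G assms(3) sf_mult by blast
next
  fix x assume "x \<in> Domain (\<Union>C)"
  then obtain G where G: "G \<in> C" "x \<in> Domain G" by blast
  show "- x \<in> Domain (\<Union>C)" using G assms(3) sf_uminus by blast
  show "inverse x \<in> Domain (\<Union>C)" using G assms(3) sf_inverse by blast
qed

lemma chain_emb: assumes "chain\<^sub>\<subseteq> C" "C \<noteq> {}" "\<forall>G\<in>C. fnl G \<and> emb (Domain G) (fg G)"
  shows "emb (Domain (\<Union>C)) (fg (\<Union>C))"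
  unfolding emb_def
proof (intro conjI ballI)
  have F: "\<forall>G\<in>C. fnl G" using assms(3) by blast
  show "sf (Domain (\<Union>C))" using chain_sf[OF assms(1,2)] assms(3) emb_sf by blast
  obtain G where G: "G \<in> C" using assms(2) by blast
  have "1 \<in> Domain G" using G assms(3) emb_sf sf_1 by blast
  then show "fg (\<Union>C) 1 = 1" using chain_fg[OF assms(1) F G] G assms(3) emb_1 by metis
  fix x y assume "x \<in> Domain (\<Union>C)" "y \<in> Domain (\<Union>C)"
  then obtain G where G: "G \<in> C" "x \<in> Domain G" "y \<in> Domain G" using chain_two[OF assms(1)] by blast
  have e: "emb (Domain G) (fg G)" using G assms(3) by blast
  have s: "x + y \<in> Domain G" "x * y \<in> Domain G" using G emb_sf[OF e] sf_add sf_mult by auto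
  show "fg (\<Union>C) (x + y) = fg (\<Union>C) x + fg (\<Union>C) y"
    using chain_fg[OF assms(1) F G(1)] G s emb_add[OF e] by simp
  show "fg (\<Union>C) (x * y) = fg (\<Union>C) x * fg (\<Union>C) y"
    using chain_fg[OF assms(1) F G(1)] G s emb_mult[OF e] by simp
qed

lemma chain_der: assumes "chain\<^sub>\<subseteq> C" "C \<noteq> {}" "\<forall>G\<in>C. fnl G \<and> der (Domain G) (fg G)"
  shows "der (Domain (\<Union>C)) (fg (\<Union>C))"
  unfolding der_def
proof (intro conjI ballI)
  have F: "\<forall>G\<in>C. fnl G" using assms(3) by blast
  show "sf (Domain (\<Union>C))" using chain_sf[OF assms(1,2)] assms(3) der_sf by blast
  fix x y assume "x \<in> Domain (\<Union>C)" "y \<in> Domain (\<Union>C)"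
  then obtain G where G: "G \<in> C" "x \<in> Domain G" "y \<in> Domain G" using chain_two[OF assms(1)] by blast
  have e: "der (Domain G) (fg G)" using G assms(3) by blast
  have s: "x + y \<in> Domain G" "x * y \<in> Domain G" using G der_sf[OF e] sf_add sf_mult by auto
  show "fg (\<Union>C) (x + y) = fg (\<Union>C) x + fg (\<Union>C) y"
    using chain_fg[OF assms(1) F G(1)] G s der_add[OF e] by simp
  show "fg (\<Union>C) (x * y) = x * fg (\<Union>C) y + y * fg (\<Union>C) x"
    using chain_fg[OF assms(1) F G(1)] G s der_mult[OF e] by simp
qed

lemma chain_img: assumes "chain\<^sub>\<subseteq> C" "\<forall>G\<in>C. fnl G \<and> fg G ` Domain G = Domain G"
  shows "fg (\<Union>C) ` Domain (\<Union>C) = Domain (\<Union>C)"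
proof -
  have F: "\<forall>G\<in>C. fnl G" using assms(2) by blast
  have "fg (\<Union>C) ` Domain (\<Union>C) = (\<Union>G\<in>C. fg (\<Union>C) ` Domain G)" by auto
  also have "\<dots> = (\<Union>G\<in>C. fg G ` Domain G)"
    using chain_fg[OF assms(1) F] by (intro SUP_cong refl image_cong) auto
  also have "\<dots> = (\<Union>G\<in>C. Domain G)" using assms(2) by auto
  finally show ?thesis by auto
qed

subsection \<open>Derivations of C\<close>

lemma der_extend:
  assumes D0: "der K0 D0" shows "\<exists>D. der UNIV D \<and> (\<forall>x\<in>K0. D x = D0 x)"
proof -
  define A where "A = {G. fnl G \<and> der (Domain G) (fg G) \<and> gr K0 D0 \<subseteq> G}"
  have G0: "gr K0 D0 \<in> A" unfolding A_def using gr_fnl gr_Domain der_cong[OF D0] gr_fg by auto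
  have "\<forall>C\<in>chains A. \<exists>U\<in>A. \<forall>X\<in>C. X \<subseteq> U"
  proof
    fix C assume C: "C \<in> chains A"
    show "\<exists>U\<in>A. \<forall>X\<in>C. X \<subseteq> U"
    proof (cases "C = {}")
      case True then show ?thesis using G0 by blast
    next
      case False
      have ch: "chain\<^sub>\<subseteq> C" "C \<subseteq> A" using C unfolding chains_def by auto
      have a1: "fnl (\<Union>C)" by (rule chain_fnl[OF ch(1)]) (use ch(2) in \<open>auto simp: A_def\<close>)
      have a2: "der (Domain (\<Union>C)) (fg (\<Union>C))" by (rule chain_der[OF ch(1) False]) (use ch(2) in \<open>auto simp: A_def\<close>)
      obtain G where "G \<in> C" using False by blast
      hence a3: "gr K0 D0 \<subseteq> \<Union>C" using ch(2) unfolding A_def by blast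
      have "\<Union>C \<in> A" unfolding A_def using a1 a2 a3 by blast
      then show ?thesis by blast
    qed
  qed
  from Zorn_Lemma2[OF this] obtain M where M: "M \<in> A" "\<forall>X\<in>A. M \<subseteq> X \<longrightarrow> X = M" by blast
  define K where "K = Domain M"
  define D where "D = fg M"
  have MD: "fnl M" "der K D" "gr K0 D0 \<subseteq> M" using M(1) unfolding A_def K_def D_def by auto
  have KU: "K = UNIV"
  proof (rule ccontr)
    assume "K \<noteq> UNIV"
    then obtain z where z: "z \<notin> K" by blast
    obtain w where C: "condD K D z w"
    proof (cases "alg K z")
      case True
      then obtain m where "minp K z m" using minp_ex by blast
      from condD_alg[OF MD(2) this] show ?thesis using that by blast
    next
      case False
      from condD_trans[OF False] show ?thesis using that by blast
    qed
    define G' where "G' = gr (adj K z) (dext K D z w)"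
    have "G' \<in> A" unfolding A_def
    proof (intro CollectI conjI)
      show "fnl G'" unfolding G'_def by (rule gr_fnl)
      show "der (Domain G') (fg G')" unfolding G'_def gr_Domain
        using der_cong[OF dext_der[OF MD(2) C]] gr_fg by blast
      show "gr K0 D0 \<subseteq> G'"
      proof
        fix xy assume "xy \<in> gr K0 D0"
        hence xy: "xy \<in> M" using MD(3) by blast
        obtain x y where e: "xy = (x, y)" by fastforce
        have xK: "x \<in> K" using xy e unfolding K_def by blast
        have "y = D x" using fg_mem[OF MD(1)] xy e unfolding D_def by blast
        then show "xy \<in> G'" unfolding G'_def gr_def e
          using dext_K[OF MD(2) C xK] adj_K[OF der_sf[OF MD(2)] xK] by auto
      qed
    qed
    moreover have "M \<subseteq> G'"
    proof
      fix xy assume xy: "xy \<in> M"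
      obtain x y where e: "xy = (x, y)" by fastforce
      have xK: "x \<in> K" using xy e unfolding K_def by blast
      have "y = D x" using fg_mem[OF MD(1)] xy e unfolding D_def by blast
      then show "xy \<in> G'" unfolding G'_def gr_def e
        using dext_K[OF MD(2) C xK] adj_K[OF der_sf[OF MD(2)] xK] by auto
    qed
    ultimately have "G' = M" using M(2) by blast
    moreover have "Domain G' = adj K z" unfolding G'_def by (rule gr_Domain)
    ultimately have "z \<in> Domain M" using adj_z[OF der_sf[OF MD(2)]] by simp
    hence "z \<in> K" unfolding K_def .
    thus False using z by contradiction
  qed
  have "\<forall>x\<in>K0. D x = D0 x"
  proof
    fix x assume "x \<in> K0"
    hence "(x, D0 x) \<in> M" using MD(3) unfolding gr_def by blast
    thus "D x = D0 x" unfolding D_def using fg_mem[OF MD(1)] by blast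
  qed
  then show ?thesis using MD(2) KU by blast
qed

subsection \<open>Automorphisms of C\<close>

lemma root_lift:
  assumes psi: "emb UNIV \<psi>"
  shows "p \<noteq> 0 \<Longrightarrow> poly (map_poly \<psi> p) y = 0 \<Longrightarrow> \<exists>r. poly p r = 0 \<and> \<psi> r = y"
proof (induction "Polynomial.degree p" arbitrary: p rule: less_induct)
  case less
  have KU: "p \<in> KP UNIV" for p by (simp add: KP_def)
  have p0: "\<psi> 0 = 0" using emb_0[OF psi] .
  show ?case
  proof (cases "Polynomial.degree p = 0")
    case True
    then obtain c where c: "p = [:c:]" by (metis degree_eq_zeroE)
    have "c \<noteq> 0" using less.prems c by simp
    hence "\<psi> c \<noteq> 0" using emb_nz[OF psi] by simp
    thus ?thesis using less.prems c by (simp add: mp_const[where f=\<psi>, OF p0])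
  next
    case False
    hence "\<not> constant (poly p)" by (simp add: constant_degree)
    then obtain r where r: "poly p r = 0" using fundamental_theorem_of_algebra by blast
    then obtain q where q: "p = [:-r, 1:] * q" using poly_eq_0_iff_dvd by (metis dvdE)
    have q0: "q \<noteq> 0" using less.prems q by auto
    have "Polynomial.degree p = Polynomial.degree [:-r, 1:] + Polynomial.degree q"
      unfolding q by (rule degree_mult_eq) (use q0 in auto)
    hence dq: "Polynomial.degree q < Polynomial.degree p" by simp
    have "map_poly \<psi> p = map_poly \<psi> [:-r, 1:] * map_poly \<psi> q" unfolding q by (rule mp_mult[OF psi KU KU])
    also have "map_poly \<psi> [:-r, 1:] = [:- \<psi> r, 1:]"
      using p0 emb_1[OF psi] addh_uminus[OF sf_UNIV emb_addh[OF psi]] by (simp add: map_poly_pCons)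
    finally have "(y - \<psi> r) * poly (map_poly \<psi> q) y = 0" using less.prems(2) by auto
    then have "y - \<psi> r = 0 \<or> poly (map_poly \<psi> q) y = 0" by simp
    then show ?thesis
    proof
      assume "y - \<psi> r = 0" then show ?thesis using r by auto
    next
      assume "poly (map_poly \<psi> q) y = 0"
      then obtain r' where "poly q r' = 0" "\<psi> r' = y" using less.hyps[OF dq q0] by blast
      then show ?thesis using q by auto
    qed
  qed
qed

lemma aut_extend:
  assumes f0: "emb K0 f0" and im0: "f0 ` K0 = K0"
  shows "\<exists>\<phi>. emb UNIV \<phi> \<and> \<phi> ` UNIV = UNIV \<and> (\<forall>x\<in>K0. \<phi> x = f0 x)"
proof -
  define A where "A = {G. fnl G \<and> emb (Domain G) (fg G) \<and> fg G ` Domain G = Domain G \<and> gr K0 f0 \<subseteq> G}"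
  have G0: "gr K0 f0 \<in> A" unfolding A_def using gr_fnl gr_Domain emb_cong[OF f0] gr_fg im0
    by (auto simp: image_def)
  have "\<forall>C\<in>chains A. \<exists>U\<in>A. \<forall>X\<in>C. X \<subseteq> U"
  proof
    fix C assume C: "C \<in> chains A"
    show "\<exists>U\<in>A. \<forall>X\<in>C. X \<subseteq> U"
    proof (cases "C = {}")
      case True then show ?thesis using G0 by blast
    next
      case False
      have ch: "chain\<^sub>\<subseteq> C" "C \<subseteq> A" using C unfolding chains_def by auto
      have a1: "fnl (\<Union>C)" by (rule chain_fnl[OF ch(1)]) (use ch(2) in \<open>auto simp: A_def\<close>)
      have a2: "emb (Domain (\<Union>C)) (fg (\<Union>C))" by (rule chain_emb[OF ch(1) False]) (use ch(2) in \<open>auto simp: A_def\<close>)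
      have a4: "fg (\<Union>C) ` Domain (\<Union>C) = Domain (\<Union>C)"
        by (rule chain_img[OF ch(1)]) (use ch(2) in \<open>unfold A_def, blast\<close>)
      obtain G where "G \<in> C" using False by blast
      hence a3: "gr K0 f0 \<subseteq> \<Union>C" using ch(2) unfolding A_def by blast
      have "\<Union>C \<in> A" unfolding A_def using a1 a2 a3 a4 by blast
      then show ?thesis by blast
    qed
  qed
  from Zorn_Lemma2[OF this] obtain M where M: "M \<in> A" "\<forall>X\<in>A. M \<subseteq> X \<longrightarrow> X = M" by blast
  define K where "K = Domain M"
  define f where "f = fg M"
  have MD: "fnl M" "emb K f" "f ` K = K" "gr K0 f0 \<subseteq> M" using M(1) unfolding A_def K_def f_def by auto
  have Ksf: "sf K" using emb_sf[OF MD(2)] .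
  have fK: "\<forall>x\<in>K. fg G x = f x" if "fnl G" "M \<subseteq> G" for G
    using that fg_mem fg_in unfolding f_def K_def by (metis subsetD)
  have allalg: "alg K z" for z
  proof (rule ccontr)
    assume na: "\<not> alg K z"
    have C: "condC K f z z" using condC_trans[OF MD(2) na] na MD(3) by simp
    define G' where "G' = gr (adj K z) (ext K f z z)"
    have "M \<subseteq> G'"
    proof
      fix xy assume xy: "xy \<in> M"
      obtain x y where e: "xy = (x, y)" by fastforce
      have xK: "x \<in> K" using xy e unfolding K_def by blast
      have "y = f x" using fg_mem[OF MD(1)] xy e unfolding f_def by blast
      then show "xy \<in> G'" unfolding G'_def gr_def e
        using ext_K[OF MD(2) C xK] adj_K[OF Ksf xK] by auto
    qed
    moreover have "G' \<in> A" unfolding A_def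
    proof (intro CollectI conjI)
      show "fnl G'" unfolding G'_def by (rule gr_fnl)
      show "emb (Domain G') (fg G')" unfolding G'_def gr_Domain
        using emb_cong[OF ext_emb[OF MD(2) C]] gr_fg by blast
      have "fg G' ` adj K z = ext K f z z ` adj K z" unfolding G'_def using gr_fg by (intro image_cong) auto
      also have "\<dots> = adj K z" using ext_image[OF MD(2) C] MD(3) by simp
      finally show "fg G' ` Domain G' = Domain G'" unfolding G'_def gr_Domain .
      show "gr K0 f0 \<subseteq> G'" using MD(4) \<open>M \<subseteq> G'\<close> by blast
    qed
    ultimately have "G' = M" using M(2) by blast
    moreover have "Domain G' = adj K z" unfolding G'_def by (rule gr_Domain)
    ultimately have "z \<in> Domain M" using adj_z[OF Ksf] by simp
    hence "z \<in> K" unfolding K_def .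
    thus False using na alg_self[OF Ksf] by blast
  qed
  define B where "B = {H. fnl H \<and> emb (Domain H) (fg H) \<and> M \<subseteq> H}"
  have MB: "M \<in> B" unfolding B_def using MD unfolding K_def f_def by auto
  have "\<forall>C\<in>chains B. \<exists>U\<in>B. \<forall>X\<in>C. X \<subseteq> U"
  proof
    fix C assume C: "C \<in> chains B"
    show "\<exists>U\<in>B. \<forall>X\<in>C. X \<subseteq> U"
    proof (cases "C = {}")
      case True then show ?thesis using MB by blast
    next
      case False
      have ch: "chain\<^sub>\<subseteq> C" "C \<subseteq> B" using C unfolding chains_def by auto
      have a1: "fnl (\<Union>C)" by (rule chain_fnl[OF ch(1)]) (use ch(2) in \<open>auto simp: B_def\<close>)
      have a2: "emb (Domain (\<Union>C)) (fg (\<Union>C))" by (rule chain_emb[OF ch(1) False]) (use ch(2) in \<open>auto simp: B_def\<close>)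
      obtain G where "G \<in> C" using False by blast
      hence a3: "M \<subseteq> \<Union>C" using ch(2) unfolding B_def by blast
      have "\<Union>C \<in> B" unfolding B_def using a1 a2 a3 by blast
      then show ?thesis by blast
    qed
  qed
  from Zorn_Lemma2[OF this] obtain H where H: "H \<in> B" "\<forall>X\<in>B. H \<subseteq> X \<longrightarrow> X = H" by blast
  define L where "L = Domain H"
  define \<psi> where "\<psi> = fg H"
  have HD: "fnl H" "emb L \<psi>" "M \<subseteq> H" using H(1) unfolding B_def L_def \<psi>_def by auto
  have KL: "K \<subseteq> L" using HD(3) unfolding K_def L_def by blast
  have psif: "\<forall>x\<in>K. \<psi> x = f x" using fK[OF HD(1,3)] unfolding \<psi>_def by blast
  have LU: "L = UNIV"
  proof (rule ccontr)
    assume "L \<noteq> UNIV"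
    then obtain z where z: "z \<notin> L" by blast
    have "alg L z" using alg_mono[OF KL allalg] .
    then obtain m where m: "minp L z m" using minp_ex by blast
    obtain w where w: "poly (map_poly \<psi> m) w = 0" using alg_root_exists[OF HD(2) m] by blast
    have C: "condC L \<psi> z w" using condC_alg[OF HD(2) m w] .
    define G' where "G' = gr (adj L z) (ext L \<psi> z w)"
    have "H \<subseteq> G'"
    proof
      fix xy assume xy: "xy \<in> H"
      obtain x y where e: "xy = (x, y)" by fastforce
      have xK: "x \<in> L" using xy e unfolding L_def by blast
      have "y = \<psi> x" using fg_mem[OF HD(1)] xy e unfolding \<psi>_def by blast
      then show "xy \<in> G'" unfolding G'_def gr_def e
        using ext_K[OF HD(2) C xK] adj_K[OF emb_sf[OF HD(2)] xK] by auto
    qed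
    moreover have "G' \<in> B" unfolding B_def
    proof (intro CollectI conjI)
      show "fnl G'" unfolding G'_def by (rule gr_fnl)
      show "emb (Domain G') (fg G')" unfolding G'_def gr_Domain
        using emb_cong[OF ext_emb[OF HD(2) C]] gr_fg by blast
      show "M \<subseteq> G'" using HD(3) \<open>H \<subseteq> G'\<close> by blast
    qed
    ultimately have "G' = H" using H(2) by blast
    moreover have "Domain G' = adj L z" unfolding G'_def by (rule gr_Domain)
    ultimately have "z \<in> Domain H" using adj_z[OF emb_sf[OF HD(2)]] by simp
    hence "z \<in> L" unfolding L_def .
    thus False using z by contradiction
  qed
  have psiU: "emb UNIV \<psi>" using HD(2) LU by simp
  have surj: "\<psi> ` UNIV = UNIV"
  proof -
    have "y \<in> \<psi> ` UNIV" for y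
    proof -
      obtain q where q: "q \<in> KP K" "q \<noteq> 0" "poly q y = 0" using allalg[of y] unfolding alg_def by blast
      obtain p where p: "p \<in> KP K" "map_poly f p = q" using mp_surj[OF MD(2)] q(1) MD(3) by auto
      have "map_poly \<psi> p = map_poly f p"
        using p(1) psif emb_0[OF MD(2)] emb_0[OF psiU] by (intro poly_eqI) (simp add: coeff_map_poly KP_coeff)
      hence mq: "map_poly \<psi> p = q" using p(2) by simp
      have "p \<noteq> 0" using q(2) p(2) by auto
      then obtain r where "\<psi> r = y" using root_lift[OF psiU] mq q(3) by blast
      thus ?thesis by blast
    qed
    thus ?thesis by blast
  qed
  have "H \<in> A" unfolding A_def using HD(1) HD(2) LU surj MD(4) HD(3) unfolding L_def \<psi>_def by auto
  hence "H = M" using M(2) HD(3) by blast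
  hence KU: "K = UNIV" using LU unfolding K_def L_def by simp
  have "\<forall>x\<in>K0. f x = f0 x"
  proof
    fix x assume "x \<in> K0"
    hence "(x, f0 x) \<in> M" using MD(4) unfolding gr_def by blast
    thus "f x = f0 x" unfolding f_def using fg_mem[OF MD(1)] by blast
  qed
  then show ?thesis using MD(2,3) KU by auto
qed


lemma sf_Rats: "sf (\<rat> :: complex set)"
  unfolding sf_def by (auto simp: Rats_add Rats_mult Rats_inverse)

lemma KP_Rats_countable: "countable (KP (\<rat> :: complex set))"
proof -
  have "KP \<rat> \<subseteq> range (\<lambda>l::rat list. Poly (map of_rat l) :: complex poly)"
  proof
    fix p :: "complex poly" assume p: "p \<in> KP \<rat>"
    define l where "l = map (\<lambda>c. SOME q. c = of_rat q) (coeffs p)"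
    have "map of_rat l = coeffs p"
    proof -
      have "c = of_rat (SOME q. c = of_rat q)" if "c \<in> set (coeffs p)" for c
      proof -
        have "c \<in> \<rat>" using that p unfolding KP_def by (auto simp: coeffs_def split: if_splits)
        then obtain q where "c = of_rat q" by (auto elim: Rats_cases)
        then show ?thesis by (rule someI)
      qed
      then show ?thesis unfolding l_def by (simp add: map_idI)
    qed
    then show "p \<in> range (\<lambda>l::rat list. Poly (map of_rat l) :: complex poly)"
      by (metis Poly_coeffs rangeI)
  qed
  moreover have "countable (range (\<lambda>l::rat list. Poly (map of_rat l) :: complex poly))" by simp
  ultimately show ?thesis by (rule countable_subset)
qed

lemma exists_transcendental: "\<exists>\<alpha>::complex. \<not> alg \<rat> \<alpha>"
proof -
  have "{x. alg \<rat> x} = (\<Union>p\<in>KP \<rat> - {0}. {x. poly p x = 0})" unfolding alg_def by auto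
  moreover have "countable (\<Union>p\<in>KP \<rat> - {0}. {x. poly p x = 0})"
    using KP_Rats_countable by (intro countable_UN) (auto intro: countable_finite poly_roots_finite)
  ultimately have "countable {x. alg \<rat> x}" by simp
  then have "{x. alg \<rat> x} \<noteq> UNIV" using uncountable_UNIV_complex by auto
  then show ?thesis by auto
qed

lemma exists_der: assumes a: "\<not> alg \<rat> \<alpha>" shows "\<exists>D. der UNIV D \<and> D \<alpha> = 1"
proof -
  have d0: "der \<rat> (\<lambda>_. 0)" unfolding der_def using sf_Rats by simp
  have C: "condD \<rat> (\<lambda>_. 0) \<alpha> 1" using condD_trans[OF a] .
  have d1: "der (adj \<rat> \<alpha>) (dext \<rat> (\<lambda>_. 0) \<alpha> 1)" using dext_der[OF d0 C] .
  obtain D where D: "der UNIV D" "\<forall>x\<in>adj \<rat> \<alpha>. D x = dext \<rat> (\<lambda>_. 0) \<alpha> 1 x"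
    using der_extend[OF d1] by blast
  have "D \<alpha> = 1" using D(2) adj_z[OF sf_Rats, of \<alpha>] dext_z[OF d0 C] by simp
  then show ?thesis using D(1) by blast
qed

lemma X_neg_KP: "sf K \<Longrightarrow> [:0, -1:] \<in> KP K"
  by (simp add: KP_pCons KP_const sf_0 sf_1 sf_uminus)

lemma alg_neg: assumes K: "sf K" and a: "alg K (- z)" shows "alg K z"
proof -
  obtain p where p: "p \<in> KP K" "p \<noteq> 0" "poly p (- z) = 0" using a unfolding alg_def by blast
  have "pcompose p [:0, -1:] \<in> KP K" using KP_pcompose[OF K p(1) X_neg_KP[OF K]] .
  moreover have "pcompose p [:0, -1:] \<noteq> 0" using p(2) by (simp add: pcompose_eq_0_iff)
  moreover have "poly (pcompose p [:0, -1:]) z = 0" using p(3) by (simp add: poly_pcompose)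
  ultimately show ?thesis unfolding alg_def by blast
qed

lemma adj_neg: assumes K: "sf K" shows "adj K (- z) \<subseteq> adj K z"
proof
  fix x assume "x \<in> adj K (- z)"
  then obtain p q where pq: "p \<in> KP K" "q \<in> KP K" "poly q (- z) \<noteq> 0" "x = poly p (- z) / poly q (- z)"
    by (rule adjE)
  have "x = poly (pcompose p [:0, -1:]) z / poly (pcompose q [:0, -1:]) z" using pq(4) by (simp add: poly_pcompose)
  moreover have "poly (pcompose q [:0, -1:]) z \<noteq> 0" using pq(3) by (simp add: poly_pcompose)
  ultimately show "x \<in> adj K z"
    using adjI[OF KP_pcompose[OF K pq(1) X_neg_KP[OF K]] KP_pcompose[OF K pq(2) X_neg_KP[OF K]]] by simp
qed

lemma adj_neg_eq: assumes K: "sf K" shows "adj K (- z) = adj K z"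
  using adj_neg[OF K, of z] adj_neg[OF K, of "- z"] by simp

lemma emb_id: "sf K \<Longrightarrow> emb K id" unfolding emb_def by simp

lemma exists_aut:
  assumes K: "sf K" and a: "\<not> alg K \<alpha>"
  shows "\<exists>\<tau>. emb UNIV \<tau> \<and> surj \<tau> \<and> \<tau> \<alpha> = - \<alpha> \<and> (\<forall>x\<in>K. \<tau> x = x)"
proof -
  have na: "\<not> alg (id ` K) (- \<alpha>)" using a alg_neg[OF K, of \<alpha>] by auto
  have C: "condC K id \<alpha> (- \<alpha>)" using condC_trans[OF emb_id[OF K] a na] .
  define f0 where "f0 = ext K id \<alpha> (- \<alpha>)"
  have e0: "emb (adj K \<alpha>) f0" unfolding f0_def using ext_emb[OF emb_id[OF K] C] .
  have i0: "f0 ` adj K \<alpha> = adj K \<alpha>" unfolding f0_def using ext_image[OF emb_id[OF K] C] adj_neg_eq[OF K] by simp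
  obtain \<tau> where t: "emb UNIV \<tau>" "surj \<tau>" "\<forall>x\<in>adj K \<alpha>. \<tau> x = f0 x" using aut_extend[OF e0 i0] by blast
  have "\<tau> \<alpha> = - \<alpha>" using t(3) adj_z[OF K, of \<alpha>] ext_z[OF emb_id[OF K] C] unfolding f0_def by simp
  moreover have "\<forall>x\<in>K. \<tau> x = x" using t(3) adj_K[OF K] ext_K[OF emb_id[OF K] C] unfolding f0_def by simp
  ultimately show ?thesis using t by blast
qed


lemma split_sum: "(\<Sum>i\<le>Suc n. f i) = f 0 + (\<Sum>i=1..n. f i) + f (Suc n)"
proof -
  have "{..n} = insert 0 {1..n}" by auto
  hence "(\<Sum>i\<le>n. f i) = f 0 + (\<Sum>i=1..n. f i)" by (simp add: sum.insert)
  thus ?thesis by (simp add: sum.atMost_Suc)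
qed

lemma L0: "1 \<le> m \<Longrightarrow> (\<Sum>i\<le>m. (-1::complex)^(m-i) * of_nat (m choose i)) = 0"
  using binomial_ring[of "1::complex" "-1" m] by (simp add: mult.commute power_0_left)

lemma L1: "(\<Sum>i\<le>Suc m. (-1::complex)^(Suc m-i) * of_nat (Suc m choose i) * of_nat i)
   = of_nat (Suc m) * (\<Sum>j\<le>m. (-1::complex)^(m-j) * of_nat (m choose j))"
proof -
  have "(\<Sum>i\<le>Suc m. (-1::complex)^(Suc m-i) * of_nat (Suc m choose i) * of_nat i)
     = (\<Sum>j\<le>m. (-1::complex)^(m-j) * of_nat (Suc m choose Suc j) * of_nat (Suc j))"
    by (subst sum.atMost_Suc_shift) (simp del: binomial_Suc_Suc)
  also have "\<dots> = (\<Sum>j\<le>m. (-1::complex)^(m-j) * (of_nat (Suc m) * of_nat (m choose j)))"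
  proof (rule sum.cong[OF refl])
    fix j
    have "of_nat (Suc m choose Suc j) * of_nat (Suc j) = (of_nat (Suc m) * of_nat (m choose j) :: complex)"
      using Suc_times_binomial_eq[of m j] by (metis of_nat_mult)
    then show "(-1::complex)^(m-j) * of_nat (Suc m choose Suc j) * of_nat (Suc j) = (-1::complex)^(m-j) * (of_nat (Suc m) * of_nat (m choose j))"
      by (simp add: mult.assoc)
  qed
  also have "\<dots> = of_nat (Suc m) * (\<Sum>j\<le>m. (-1::complex)^(m-j) * of_nat (m choose j))"
    by (simp add: sum_distrib_left algebra_simps)
  finally show ?thesis .
qed

lemma L2: "(\<Sum>i\<le>Suc m. (-1::complex)^(Suc m-i) * of_nat (Suc m choose i) * (of_nat i * of_nat (i - 1)))
   = of_nat (Suc m) * (\<Sum>j\<le>m. (-1::complex)^(m-j) * of_nat (m choose j) * of_nat j)"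
proof -
  have "(\<Sum>i\<le>Suc m. (-1::complex)^(Suc m-i) * of_nat (Suc m choose i) * (of_nat i * of_nat (i - 1)))
     = (\<Sum>j\<le>m. (-1::complex)^(m-j) * of_nat (Suc m choose Suc j) * (of_nat (Suc j) * of_nat j))"
    by (subst sum.atMost_Suc_shift) (simp del: binomial_Suc_Suc)
  also have "\<dots> = (\<Sum>j\<le>m. of_nat (Suc m) * ((-1::complex)^(m-j) * of_nat (m choose j) * of_nat j))"
  proof (rule sum.cong[OF refl])
    fix j
    have "of_nat (Suc m choose Suc j) * of_nat (Suc j) = (of_nat (Suc m) * of_nat (m choose j) :: complex)"
      using Suc_times_binomial_eq[of m j] by (metis of_nat_mult)
    then show "(-1::complex)^(m-j) * of_nat (Suc m choose Suc j) * (of_nat (Suc j) * of_nat j) = of_nat (Suc m) * ((-1::complex)^(m-j) * of_nat (m choose j) * of_nat j)"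
      by (metis (no_types, lifting) mult.assoc mult.left_commute)
  qed
  also have "\<dots> = of_nat (Suc m) * (\<Sum>j\<le>m. (-1::complex)^(m-j) * of_nat (m choose j) * of_nat j)"
    by (simp add: sum_distrib_left)
  finally show ?thesis .
qed

lemma J1: assumes "2 \<le> m" shows "(\<Sum>i\<le>m. (-1::complex)^(m-i) * of_nat (m choose i) * of_nat i) = 0"
proof -
  obtain m' where m: "m = Suc m'" "1 \<le> m'" using assms by (cases m) auto
  show ?thesis unfolding m(1) L1 using L0[OF m(2)] by simp
qed

lemma J2: assumes "3 \<le> m" shows "(\<Sum>i\<le>m. (-1::complex)^(m-i) * of_nat (m choose i) * (of_nat i * of_nat (i - 1))) = 0"
proof -
  obtain m' where m: "m = Suc m'" "2 \<le> m'" using assms by (cases m) auto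
  show ?thesis unfolding m(1) L2 using J1[OF m(2)] by simp
qed

lemma I1: assumes "1 \<le> n"
  shows "(\<Sum>i=1..n. of_nat (Suc n choose i) * (-1)^(n-i) * of_nat i) = (of_nat (Suc n) :: complex)"
proof -
  have "0 = (\<Sum>i\<le>Suc n. (-1::complex)^(Suc n-i) * of_nat (Suc n choose i) * of_nat i)"
    using J1[of "Suc n"] assms by simp
  also have "\<dots> = (\<Sum>i=1..n. (-1::complex)^(Suc n-i) * of_nat (Suc n choose i) * of_nat i) + of_nat (Suc n)"
    unfolding split_sum by simp
  also have "(\<Sum>i=1..n. (-1::complex)^(Suc n-i) * of_nat (Suc n choose i) * of_nat i)
      = - (\<Sum>i=1..n. of_nat (Suc n choose i) * (-1)^(n-i) * of_nat i)"
    by (simp add: sum_negf[symmetric] Suc_diff_le mult_ac) 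
  finally show ?thesis by (simp add: eq_neg_iff_add_eq_0 add.commute)
qed

lemma I2: assumes "2 \<le> n"
  shows "(\<Sum>i=1..n. of_nat (Suc n choose i) * (-1)^(n-i) * (of_nat i * of_nat (i - 1))) = (of_nat (Suc n) * of_nat n :: complex)"
proof -
  have "0 = (\<Sum>i\<le>Suc n. (-1::complex)^(Suc n-i) * of_nat (Suc n choose i) * (of_nat i * of_nat (i - 1)))"
    using J2[of "Suc n"] assms by simp
  also have "\<dots> = (\<Sum>i=1..n. (-1::complex)^(Suc n-i) * of_nat (Suc n choose i) * (of_nat i * of_nat (i - 1))) + of_nat (Suc n) * of_nat n"
    unfolding split_sum by simp
  also have "(\<Sum>i=1..n. (-1::complex)^(Suc n-i) * of_nat (Suc n choose i) * (of_nat i * of_nat (i - 1)))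
      = - (\<Sum>i=1..n. of_nat (Suc n choose i) * (-1)^(n-i) * (of_nat i * of_nat (i - 1)))"
    by (simp add: sum_negf[symmetric] Suc_diff_le mult_ac)
  finally show ?thesis by (simp add: eq_neg_iff_add_eq_0 add.commute)
qed


definition isaut :: "nat \<Rightarrow> (complex \<Rightarrow> complex) \<Rightarrow> (complex \<times> complex \<Rightarrow> complex \<times> complex) \<Rightarrow> bool" where
  "isaut n sp ss \<longleftrightarrow> bij sp \<and> bij ss \<and> sp 0 = 0 \<and>
     (\<forall>a b. sp (a + b) = sp a + sp b) \<and> (\<forall>a b. sp (a * b) = sp a * sp b) \<and> (\<forall>a. sp (- a) = - sp a) \<and> sp 1 = 1 \<and>
     (\<forall>s. fst (ss s) = sp (fst s)) \<and>
     (\<forall>s t. ss (fst s + fst t, snd s + snd t) = (fst (ss s) + fst (ss t), snd (ss s) + snd (ss t))) \<and>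
     (\<forall>b s. ss (fst s, snd s + b) = (fst (ss s), snd (ss s) + sp b)) \<and>
     (\<forall>xs. Rn n (map ss xs) \<longleftrightarrow> Rn n xs)"

lemma ev_aut:
  assumes "isaut n sp ss"
  shows "evp (sp \<circ> ep) (ss \<circ> es) t = sp (evp ep es t)" and "evs (sp \<circ> ep) (ss \<circ> es) s = ss (evs ep es s)"
proof (induct t and s)
  case (PV x) then show ?case by simp
next
  case PZero then show ?case using assms by (simp add: isaut_def)
next
  case POne then show ?case using assms by (simp add: isaut_def)
next
  case (PPlus t u) then show ?case using assms by (simp add: isaut_def)
next
  case (PTimes t u) then show ?case using assms by (simp add: isaut_def)
next
  case (PUminus t) then show ?case using assms by (simp add: isaut_def)
next
  case (Proj s)
  have "fst (ss (evs ep es s)) = sp (fst (evs ep es s))" using assms unfolding isaut_def by blast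
  then show ?case using Proj by simp
next
  case (SV x) then show ?case by simp
next
  case (SPlus s t)
  have "ss (fst (evs ep es s) + fst (evs ep es t), snd (evs ep es s) + snd (evs ep es t))
     = (fst (ss (evs ep es s)) + fst (ss (evs ep es t)), snd (ss (evs ep es s)) + snd (ss (evs ep es t)))"
    using assms unfolding isaut_def by blast
  then show ?case using SPlus by simp
next
  case (Act b s)
  have "ss (fst (evs ep es s), snd (evs ep es s) + evp ep es b) = (fst (ss (evs ep es s)), snd (ss (evs ep es s)) + sp (evp ep es b))"
    using assms unfolding isaut_def by blast
  then show ?case using Act by simp
qed

lemma sat_aut:
  assumes A: "isaut n sp ss"
  shows "sat n (sp \<circ> ep) (ss \<circ> es) \<phi> \<longleftrightarrow> sat n ep es \<phi>"
proof (induction \<phi> arbitrary: ep es)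
  case (EqP t u)
  have "inj sp" using A unfolding isaut_def bij_def by blast
  then show ?case by (simp only: sat.simps ev_aut[OF A]) (simp add: inj_eq)
next
  case (EqS s t)
  have "inj ss" using A unfolding isaut_def bij_def by blast
  then show ?case by (simp only: sat.simps ev_aut[OF A]) (simp add: inj_eq)
next
  case (Rel xs)
  have "map (evs (sp \<circ> ep) (ss \<circ> es)) xs = map ss (map (evs ep es) xs)" unfolding map_map by (rule map_cong[OF refl]) (simp only: ev_aut[OF A] o_apply)
  then show ?case using A unfolding isaut_def by (simp only: sat.simps)
next
  case (FNot \<phi>) then show ?case by simp
next
  case (FAnd \<phi> \<psi>) then show ?case by simp
next
  case (ExistsP v \<phi>)
  have b: "bij sp" using A unfolding isaut_def by blast
  have e: "(sp \<circ> ep)(v := z) = sp \<circ> (ep(v := inv sp z))" for z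
    using b by (auto simp: fun_eq_iff bij_is_surj surj_f_inv_f)
  have e2: "(sp \<circ> ep)(v := sp z) = sp \<circ> (ep(v := z))" for z by (auto simp: fun_eq_iff)
  show ?case
  proof
    assume "sat n (sp \<circ> ep) (ss \<circ> es) (ExistsP v \<phi>)"
    then obtain z where "sat n ((sp \<circ> ep)(v := z)) (ss \<circ> es) \<phi>" by auto
    then have "sat n (ep(v := inv sp z)) es \<phi>" using ExistsP.IH e by metis
    then show "sat n ep es (ExistsP v \<phi>)" by auto
  next
    assume "sat n ep es (ExistsP v \<phi>)"
    then obtain z where "sat n (ep(v := z)) es \<phi>" by auto
    then have "sat n ((sp \<circ> ep)(v := sp z)) (ss \<circ> es) \<phi>" using ExistsP.IH e2 by metis
    then show "sat n (sp \<circ> ep) (ss \<circ> es) (ExistsP v \<phi>)" by auto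
  qed
next
  case (ExistsS v \<phi>)
  have b: "bij ss" using A unfolding isaut_def by blast
  have e: "(ss \<circ> es)(v := z) = ss \<circ> (es(v := inv ss z))" for z
    using b by (auto simp: fun_eq_iff bij_is_surj surj_f_inv_f)
  have e2: "(ss \<circ> es)(v := ss z) = ss \<circ> (es(v := z))" for z by (auto simp: fun_eq_iff)
  show ?case
  proof
    assume "sat n (sp \<circ> ep) (ss \<circ> es) (ExistsS v \<phi>)"
    then obtain z where "sat n (sp \<circ> ep) ((ss \<circ> es)(v := z)) \<phi>" by auto
    then have "sat n ep (es(v := inv ss z)) \<phi>" using ExistsS.IH e by metis
    then show "sat n ep es (ExistsS v \<phi>)" by (simp only: sat.simps) blast
  next
    assume "sat n ep es (ExistsS v \<phi>)"
    then obtain z where "sat n ep (es(v := z)) \<phi>" by auto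
    then have "sat n (sp \<circ> ep) ((ss \<circ> es)(v := ss z)) \<phi>" using ExistsS.IH e2 by metis
    then show "sat n (sp \<circ> ep) (ss \<circ> es) (ExistsS v \<phi>)" by (simp only: sat.simps) blast
  qed
qed

lemma lenv_comp: "f d = d' \<Longrightarrow> f \<circ> lenv d xs = lenv d' (map f xs)"
  by (auto simp: lenv_def fun_eq_iff)

lemma isaut_D:
  assumes "isaut n sp ss"
  shows "bij sp" "bij ss" "sp 0 = 0" "\<And>a b. sp (a + b) = sp a + sp b" "\<And>a b. sp (a * b) = sp a * sp b"
    "\<And>a. sp (- a) = - sp a" "sp 1 = 1" "\<And>s. fst (ss s) = sp (fst s)"
    "\<And>s t. ss (fst s + fst t, snd s + snd t) = (fst (ss s) + fst (ss t), snd (ss s) + snd (ss t))"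
    "\<And>b s. ss (fst s, snd s + b) = (fst (ss s), snd (ss s) + sp b)"
    "\<And>xs. Rn n (map ss xs) \<longleftrightarrow> Rn n xs"
  using assms unfolding isaut_def by blast+

lemma isaut_ss0: assumes "isaut n sp ss" shows "ss (0, 0) = (0, 0)"
proof -
  have "ss (0,0) = (fst (ss (0,0)) + fst (ss (0,0)), snd (ss (0,0)) + snd (ss (0,0)))"
    using isaut_D(9)[OF assms, of "(0,0)" "(0,0)"] by simp
  thus ?thesis by (metis add_cancel_left_left prod.collapse prod.inject)
qed

definition tmap :: "(complex \<Rightarrow> complex) \<Rightarrow> (complex \<times> complex \<Rightarrow> complex \<times> complex)
    \<Rightarrow> complex list \<times> (complex \<times> complex) list \<Rightarrow> complex list \<times> (complex \<times> complex) list" where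
  "tmap sp ss ab = (map sp (fst ab), map ss (snd ab))"

lemma dw_aut:
  assumes A: "isaut n sp ss" and dw: "defines_with n k l \<phi> cp cs F"
  shows "defines_with n k l \<phi> (map sp cp) (map ss cs) (tmap sp ss ` F)"
  unfolding defines_with_def
proof (intro allI impI)
  fix a :: "complex list" and b :: "(complex \<times> complex) list" assume len: "length a = k \<and> length b = l"
  have bp: "bij sp" and bs: "bij ss" using A unfolding isaut_def by auto
  define a' where "a' = map (inv sp) a"
  define b' where "b' = map (inv ss) b"
  have ma: "map sp a' = a" unfolding a'_def using bp by (simp add: map_idI bij_is_surj surj_f_inv_f)
  have mb: "map ss b' = b" unfolding b'_def using bs by (simp add: map_idI bij_is_surj surj_f_inv_f)
  have injt: "inj (tmap sp ss)"
  proof (rule injI)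
    fix x y assume "tmap sp ss x = tmap sp ss y"
    then show "x = y" using bp bs unfolding tmap_def bij_def
      by (metis inj_map_eq_map prod.collapse prod.inject)
  qed
  have "(a, b) \<in> tmap sp ss ` F \<longleftrightarrow> (a', b') \<in> F"
  proof -
    have "(a, b) = tmap sp ss (a', b')" unfolding tmap_def using ma mb by simp
    then show ?thesis using injt by (metis inj_image_mem_iff)
  qed
  also have "\<dots> \<longleftrightarrow> sat n (lenv 0 (a' @ cp)) (lenv (0, 0) (b' @ cs)) \<phi>"
    using dw len unfolding defines_with_def a'_def b'_def by simp
  also have "\<dots> \<longleftrightarrow> sat n (sp \<circ> lenv 0 (a' @ cp)) (ss \<circ> lenv (0, 0) (b' @ cs)) \<phi>"
    using sat_aut[OF A] by simp
  also have "\<dots> \<longleftrightarrow> sat n (lenv 0 (a @ map sp cp)) (lenv (0, 0) (b @ map ss cs)) \<phi>"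
    using lenv_comp[of sp 0 0] lenv_comp[of ss "(0,0)" "(0,0)"] A isaut_ss0[OF A] ma mb
    unfolding isaut_def by simp
  finally show "(a, b) \<in> tmap sp ss ` F \<longleftrightarrow> sat n (lenv 0 (a @ map sp cp)) (lenv (0, 0) (b @ map ss cs)) \<phi>" .
qed

lemma dw_unique:
  assumes "defines_with n k l \<phi> cp cs F1" "defines_with n k l \<phi> cp cs F2"
    "\<forall>(a, b)\<in>F1. length a = k \<and> length b = l" "\<forall>(a, b)\<in>F2. length a = k \<and> length b = l"
  shows "F1 = F2"
  using assms unfolding defines_with_def by fast


definition adm :: "nat \<Rightarrow> (complex \<Rightarrow> complex) \<Rightarrow> bool" where
  "adm n f \<longleftrightarrow> (\<forall>x. f (x ^ Suc n) = (\<Sum>i=1..n. of_nat (Suc n choose i) * (-1) ^ (n - i) * x ^ (Suc n - i) * f (x ^ i)))"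

lemma Rn_iff:
  "Rn n xs \<longleftrightarrow> length xs = Suc n \<and> (\<forall>i\<in>{1..Suc n}. fst (xs ! (i - 1)) = fst (xs ! 0) ^ i)
     \<and> snd (xs ! n) = (\<Sum>i=1..n. of_nat (Suc n choose i) * (-1) ^ (n - i) * fst (xs ! (n - i)) * snd (xs ! (i - 1)))"
  unfolding Rn_def ..

lemma isaut_f:
  assumes add: "\<And>a b. f (a + b) = f a + f b" and ad: "adm n f"
  shows "isaut n id (\<lambda>s. (fst s, snd s + f (fst s)))"
proof -
  define ss where "ss = (\<lambda>s::complex\<times>complex. (fst s, snd s + f (fst s)))"
  have bs: "bij ss"
  proof -
    have "ss (fst s, snd s - f (fst s)) = s" for s unfolding ss_def by simp
    hence "surj ss" by (rule surjI)
    moreover have "inj ss" unfolding ss_def by (rule injI) (auto simp: prod_eq_iff)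
    ultimately show ?thesis by (simp add: bij_def)
  qed
  have f0: "f 0 = 0" using add[of 0 0] by simp
  have Rn: "Rn n (map ss xs) \<longleftrightarrow> Rn n xs" for xs
  proof (cases "length xs = Suc n")
    case False then show ?thesis unfolding Rn_iff length_map by simp
  next
    case len: True
    have nth: "map ss xs ! j = ss (xs ! j)" if "j \<le> n" for j using that len by simp
    have fstm: "fst (map ss xs ! j) = fst (xs ! j)" if "j \<le> n" for j using nth[OF that] unfolding ss_def by simp
    have c2: "(\<forall>i\<in>{1..Suc n}. fst (map ss xs ! (i - 1)) = fst (map ss xs ! 0) ^ i) \<longleftrightarrow>
        (\<forall>i\<in>{1..Suc n}. fst (xs ! (i - 1)) = fst (xs ! 0) ^ i)"
    proof (rule ball_cong[OF refl])
      fix i assume "i \<in> {1..Suc n}"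
      hence "i - 1 \<le> n" by auto
      thus "(fst (map ss xs ! (i - 1)) = fst (map ss xs ! 0) ^ i) \<longleftrightarrow> (fst (xs ! (i - 1)) = fst (xs ! 0) ^ i)"
        using fstm[of "i - 1"] fstm[of 0] by simp
    qed
    show ?thesis unfolding Rn_iff length_map
    proof (rule conj_cong[OF refl], rule conj_cong[OF c2])
      assume P: "\<forall>i\<in>{1..Suc n}. fst (xs ! (i - 1)) = fst (xs ! 0) ^ i"
      define x where "x = fst (xs ! 0)"
      have fx: "fst (xs ! j) = x ^ Suc j" if "j \<le> n" for j
      proof -
        have "Suc j \<in> {1..Suc n}" using that by auto
        then have "fst (xs ! (Suc j - 1)) = fst (xs ! 0) ^ Suc j" using P by blast
        then show ?thesis unfolding x_def by simp
      qed
      have lhs: "snd (map ss xs ! n) = snd (xs ! n) + f (x ^ Suc n)" using nth[of n] fx[of n] unfolding ss_def by simp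
      have rhs: "(\<Sum>i=1..n. of_nat (Suc n choose i) * (-1) ^ (n - i) * fst (map ss xs ! (n - i)) * snd (map ss xs ! (i - 1)))
        = (\<Sum>i=1..n. of_nat (Suc n choose i) * (-1) ^ (n - i) * fst (xs ! (n - i)) * snd (xs ! (i - 1)))
          + (\<Sum>i=1..n. of_nat (Suc n choose i) * (-1) ^ (n - i) * x ^ (Suc n - i) * f (x ^ i))"
      proof -
        have "(\<Sum>i=1..n. of_nat (Suc n choose i) * (-1) ^ (n - i) * fst (map ss xs ! (n - i)) * snd (map ss xs ! (i - 1)))
          = (\<Sum>i=1..n. of_nat (Suc n choose i) * (-1) ^ (n - i) * fst (xs ! (n - i)) * snd (xs ! (i - 1))
             + of_nat (Suc n choose i) * (-1) ^ (n - i) * x ^ (Suc n - i) * f (x ^ i))"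
        proof (rule sum.cong[OF refl])
          fix i assume i: "i \<in> {1..n}"
          have a: "fst (map ss xs ! (n - i)) = x ^ (Suc n - i)" using fstm[of "n - i"] fx[of "n - i"] i by (simp add: Suc_diff_le)
          have i1: "i - 1 \<le> n" "Suc (i - 1) = i" using i by auto
          have fi: "fst (xs ! (i - 1)) = x ^ i" using fx[OF i1(1)] i1(2) by metis
          have b: "snd (map ss xs ! (i - 1)) = snd (xs ! (i - 1)) + f (x ^ i)"
            using nth[OF i1(1)] fi unfolding ss_def by simp
          have c: "fst (xs ! (n - i)) = x ^ (Suc n - i)" using fx[of "n - i"] i by (simp add: Suc_diff_le)
          show "of_nat (Suc n choose i) * (-1) ^ (n - i) * fst (map ss xs ! (n - i)) * snd (map ss xs ! (i - 1))
            = of_nat (Suc n choose i) * (-1) ^ (n - i) * fst (xs ! (n - i)) * snd (xs ! (i - 1))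
             + of_nat (Suc n choose i) * (-1) ^ (n - i) * x ^ (Suc n - i) * f (x ^ i)"
            unfolding a b c by (simp add: algebra_simps)
        qed
        then show ?thesis by (simp add: sum.distrib)
      qed
      have fS: "f (x ^ Suc n) = (\<Sum>i=1..n. of_nat (Suc n choose i) * (-1) ^ (n - i) * x ^ (Suc n - i) * f (x ^ i))"
        using ad unfolding adm_def by blast
      have eq: "(snd (map ss xs ! n) = (\<Sum>i=1..n. of_nat (Suc n choose i) * (-1) ^ (n - i) * fst (map ss xs ! (n - i)) * snd (map ss xs ! (i - 1))))
        \<longleftrightarrow> (snd (xs ! n) = (\<Sum>i=1..n. of_nat (Suc n choose i) * (-1) ^ (n - i) * fst (xs ! (n - i)) * snd (xs ! (i - 1))))"
        unfolding lhs rhs fS by simp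
      then show "(snd (map ss xs ! n) = (\<Sum>i=1..n. of_nat (Suc n choose i) * (-1) ^ (n - i) * fst (map ss xs ! (n - i)) * snd (map ss xs ! (i - 1))))
        \<longleftrightarrow> (snd (xs ! n) = (\<Sum>i=1..n. of_nat (Suc n choose i) * (-1) ^ (n - i) * fst (xs ! (n - i)) * snd (xs ! (i - 1))))" .
    qed
  qed
  show ?thesis unfolding isaut_def
  proof (intro conjI allI)
    show "bij (id :: complex \<Rightarrow> complex)" by simp
    show "bij (\<lambda>s. (fst s, snd s + f (fst s)))" using bs unfolding ss_def .
    fix xs show "Rn n (map (\<lambda>s. (fst s, snd s + f (fst s))) xs) \<longleftrightarrow> Rn n xs" using Rn unfolding ss_def .
  qed (auto simp: add)
qed

lemma emb_U:
  assumes "emb UNIV \<tau>"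
  shows "\<And>a b. \<tau> (a + b) = \<tau> a + \<tau> b" "\<And>a b. \<tau> (a * b) = \<tau> a * \<tau> b" "\<tau> 0 = 0" "\<tau> 1 = 1"
    "\<And>a. \<tau> (- a) = - \<tau> a" "inj \<tau>"
  using assms emb_0[OF assms] addh_uminus[OF sf_UNIV emb_addh[OF assms]] emb_inj[OF assms]
  unfolding emb_def by auto

lemma emb_U_pow: "emb UNIV \<tau> \<Longrightarrow> \<tau> (x ^ k) = \<tau> x ^ k"
  by (induction k) (simp_all add: emb_U)

lemma emb_U_nat: "emb UNIV \<tau> \<Longrightarrow> \<tau> (of_nat k) = of_nat k"
  by (induction k) (simp_all add: emb_U)

lemma emb_U_sum: assumes "emb UNIV \<tau>" shows "\<tau> (sum g A) = (\<Sum>i\<in>A. \<tau> (g i))"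
  by (rule addh_sum[OF sf_UNIV emb_addh[OF assms]]) simp

lemma isaut_tau:
  assumes e: "emb UNIV \<tau>" and s: "surj \<tau>"
  shows "isaut n \<tau> (\<lambda>s. (\<tau> (fst s), \<tau> (snd s)))"
proof -
  define ss where "ss = (\<lambda>s. (\<tau> (fst s), \<tau> (snd s)))"
  have it: "inj \<tau>" using emb_U(6)[OF e] .
  have bs: "bij ss"
  proof -
    have "surj ss" unfolding ss_def
    proof (rule surjI)
      fix s show "(\<tau> (fst (inv \<tau> (fst s), inv \<tau> (snd s))), \<tau> (snd (inv \<tau> (fst s), inv \<tau> (snd s)))) = s"
        using s by (simp add: surj_f_inv_f)
    qed
    moreover have "inj ss" unfolding ss_def using it by (intro injI) (auto simp: prod_eq_iff inj_eq)
    ultimately show ?thesis by (simp add: bij_def)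
  qed
  have m1: "\<tau> (-1) = -1" using emb_U(4,5)[OF e] by metis
  have tp: "\<tau> ((-1) ^ k) = (-1) ^ k" for k using emb_U_pow[OF e] m1 by simp
  have Rn: "Rn n (map ss xs) \<longleftrightarrow> Rn n xs" for xs
  proof (cases "length xs = Suc n")
    case False then show ?thesis unfolding Rn_iff length_map by simp
  next
    case len: True
    have nth: "map ss xs ! j = ss (xs ! j)" if "j \<le> n" for j using that len by simp
    have c2: "(\<forall>i\<in>{1..Suc n}. fst (map ss xs ! (i - 1)) = fst (map ss xs ! 0) ^ i) \<longleftrightarrow>
        (\<forall>i\<in>{1..Suc n}. fst (xs ! (i - 1)) = fst (xs ! 0) ^ i)"
    proof -
      have "fst (map ss xs ! (i - 1)) = fst (map ss xs ! 0) ^ i \<longleftrightarrow> fst (xs ! (i - 1)) = fst (xs ! 0) ^ i"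
        if "i \<in> {1..Suc n}" for i
      proof -
        have "fst (map ss xs ! (i - 1)) = \<tau> (fst (xs ! (i - 1)))" "fst (map ss xs ! 0) ^ i = \<tau> (fst (xs ! 0) ^ i)"
          using nth[of "i - 1"] nth[of 0] that emb_U_pow[OF e] unfolding ss_def by auto
        then show ?thesis using it by (simp add: inj_eq)
      qed
      then show ?thesis by blast
    qed
    have c3: "snd (map ss xs ! n) = (\<Sum>i=1..n. of_nat (Suc n choose i) * (-1) ^ (n - i) * fst (map ss xs ! (n - i)) * snd (map ss xs ! (i - 1)))
      \<longleftrightarrow> \<tau> (snd (xs ! n)) = \<tau> (\<Sum>i=1..n. of_nat (Suc n choose i) * (-1) ^ (n - i) * fst (xs ! (n - i)) * snd (xs ! (i - 1)))"
    proof -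
      have "\<tau> (\<Sum>i=1..n. of_nat (Suc n choose i) * (-1) ^ (n - i) * fst (xs ! (n - i)) * snd (xs ! (i - 1)))
        = (\<Sum>i=1..n. of_nat (Suc n choose i) * (-1) ^ (n - i) * fst (map ss xs ! (n - i)) * snd (map ss xs ! (i - 1)))"
        unfolding emb_U_sum[OF e]
      proof (rule sum.cong[OF refl])
        fix i assume i: "i \<in> {1..n}"
        show "\<tau> (of_nat (Suc n choose i) * (-1) ^ (n - i) * fst (xs ! (n - i)) * snd (xs ! (i - 1)))
          = of_nat (Suc n choose i) * (-1) ^ (n - i) * fst (map ss xs ! (n - i)) * snd (map ss xs ! (i - 1))"
        proof -
          have i1: "i - 1 \<le> n" "n - i \<le> n" using i by auto
          have m1: "fst (map ss xs ! (n - i)) = \<tau> (fst (xs ! (n - i)))" using nth[OF i1(2)] unfolding ss_def by simp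
          have m2: "snd (map ss xs ! (i - 1)) = \<tau> (snd (xs ! (i - 1)))" using nth[OF i1(1)] unfolding ss_def by simp
          show ?thesis unfolding m1 m2 by (simp add: emb_U(2)[OF e] emb_U_nat[OF e] tp)
        qed
      qed
      moreover have "snd (map ss xs ! n) = \<tau> (snd (xs ! n))" using nth[of n] unfolding ss_def by simp
      ultimately show ?thesis by simp
    qed
    have c3': "\<tau> (snd (xs ! n)) = \<tau> (\<Sum>i=1..n. of_nat (Suc n choose i) * (-1) ^ (n - i) * fst (xs ! (n - i)) * snd (xs ! (i - 1)))
       \<longleftrightarrow> snd (xs ! n) = (\<Sum>i=1..n. of_nat (Suc n choose i) * (-1) ^ (n - i) * fst (xs ! (n - i)) * snd (xs ! (i - 1)))"
      using it by (simp add: inj_eq)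
    show ?thesis unfolding Rn_iff length_map
      by (rule conj_cong[OF refl], rule conj_cong[OF c2]) (use c3 c3' in simp)
  qed
  show ?thesis unfolding isaut_def
  proof (intro conjI allI)
    show "bij \<tau>" using it s by (simp add: bij_def)
    show "bij (\<lambda>s. (\<tau> (fst s), \<tau> (snd s)))" using bs unfolding ss_def .
    fix xs show "Rn n (map (\<lambda>s. (\<tau> (fst s), \<tau> (snd s))) xs) \<longleftrightarrow> Rn n xs" using Rn unfolding ss_def .
  qed (auto simp: emb_U[OF e])
qed


lemma der_U:
  assumes "der UNIV D"
  shows "\<And>a b. D (a + b) = D a + D b" "\<And>a b. D (a * b) = a * D b + b * D a" "D 0 = 0" "D 1 = 0" "\<And>a. D (- a) = - D a"
  using assms der_0[OF assms] der_1[OF assms] addh_uminus[OF sf_UNIV der_addh[OF assms]]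
  unfolding der_def by auto

lemma der_nat: "der UNIV D \<Longrightarrow> D (of_nat k) = 0"
  by (induction k) (simp_all add: der_U)

lemma der_pow: assumes D: "der UNIV D" shows "D (x ^ i) = of_nat i * x ^ (i - 1) * D x"
proof (induction i)
  case 0 then show ?case using der_U(4)[OF D] by simp
next
  case (Suc i)
  have "D (x ^ Suc i) = x * D (x ^ i) + x ^ i * D x" using der_U(2)[OF D, of x "x ^ i"] by simp
  also have "\<dots> = of_nat (Suc i) * x ^ (Suc i - 1) * D x"
  proof (cases i)
    case 0 then show ?thesis using Suc by simp
  next
    case (Suc j)
    then show ?thesis using Suc.IH by (simp add: algebra_simps)
  qed
  finally show ?case .
qed

lemma der_cnat: assumes D: "der UNIV D" shows "D (of_nat k * y) = of_nat k * D y"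
  using der_U(2)[OF D] der_nat[OF D] by simp

lemma adm_gen:
  assumes f: "\<And>x i. f (x ^ i) = A x * of_nat i * x ^ (i - 1) + B x * (of_nat i * of_nat (i - 1)) * x ^ (i - 2)"
    and n: "2 \<le> n"
  shows "adm n f"
  unfolding adm_def
proof
  fix x
  define c where "c i = (of_nat (Suc n choose i) * (-1) ^ (n - i) :: complex)" for i :: nat
  have lhs: "f (x ^ Suc n) = A x * x ^ n * of_nat (Suc n) + B x * x ^ (n - 1) * (of_nat (Suc n) * of_nat n)"
    using f[of x "Suc n"] by (simp add: algebra_simps)
  have "(\<Sum>i=1..n. of_nat (Suc n choose i) * (-1) ^ (n - i) * x ^ (Suc n - i) * f (x ^ i))
     = (\<Sum>i=1..n. A x * x ^ n * (c i * of_nat i) + B x * x ^ (n - 1) * (c i * (of_nat i * of_nat (i - 1))))"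
  proof (rule sum.cong[OF refl])
    fix i assume i: "i \<in> {1..n}"
    have "(Suc n - i) + (i - 1) = n" using i by auto
    hence e1: "x ^ (Suc n - i) * x ^ (i - 1) = x ^ n" by (metis power_add)
    have e2: "of_nat (i - 1) * (x ^ (Suc n - i) * x ^ (i - 2)) = of_nat (i - 1) * (x ^ (n - 1) :: complex)"
    proof (cases "i = 1")
      case True then show ?thesis by simp
    next
      case False
      hence "(Suc n - i) + (i - 2) = n - 1" using i by auto
      then show ?thesis by (metis power_add)
    qed
    have "of_nat (Suc n choose i) * (-1) ^ (n - i) * x ^ (Suc n - i) * f (x ^ i)
        = A x * (c i * of_nat i) * (x ^ (Suc n - i) * x ^ (i - 1))
          + B x * (c i * of_nat i) * (of_nat (i - 1) * (x ^ (Suc n - i) * x ^ (i - 2)))"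
      unfolding f c_def by (simp add: algebra_simps)
    also have "\<dots> = A x * (c i * of_nat i) * x ^ n + B x * (c i * of_nat i) * (of_nat (i - 1) * x ^ (n - 1))"
      unfolding e1 e2 ..
    also have "\<dots> = A x * x ^ n * (c i * of_nat i) + B x * x ^ (n - 1) * (c i * (of_nat i * of_nat (i - 1)))"
      by (simp add: algebra_simps)
    finally show "of_nat (Suc n choose i) * (-1) ^ (n - i) * x ^ (Suc n - i) * f (x ^ i)
        = A x * x ^ n * (c i * of_nat i) + B x * x ^ (n - 1) * (c i * (of_nat i * of_nat (i - 1)))" .
  qed
  also have "\<dots> = A x * x ^ n * (\<Sum>i=1..n. c i * of_nat i) + B x * x ^ (n - 1) * (\<Sum>i=1..n. c i * (of_nat i * of_nat (i - 1)))"
    by (simp add: sum.distrib sum_distrib_left)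
  also have "(\<Sum>i=1..n. c i * of_nat i) = of_nat (Suc n)" unfolding c_def using I1[of n] n by simp
  also have "(\<Sum>i=1..n. c i * (of_nat i * of_nat (i - 1))) = of_nat (Suc n) * of_nat n" unfolding c_def using I2[of n] n by simp
  finally show "f (x ^ Suc n) = (\<Sum>i=1..n. of_nat (Suc n choose i) * (-1) ^ (n - i) * x ^ (Suc n - i) * f (x ^ i))"
    using lhs by simp
qed

lemma adm_D: assumes D: "der UNIV D" and n: "2 \<le> n" shows "adm n D"
  by (rule adm_gen[where A = D and B = "\<lambda>_. 0", OF _ n]) (simp add: der_pow[OF D] algebra_simps)

lemma adm_DD: assumes D: "der UNIV D" and n: "2 \<le> n" shows "adm n (\<lambda>x. D (D x))"
proof (rule adm_gen[where A = "\<lambda>x. D (D x)" and B = "\<lambda>x. (D x)^2", OF _ n])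
  fix x :: complex and i :: nat
  have "D (D (x ^ i)) = D (of_nat i * (x ^ (i - 1) * D x))" using der_pow[OF D, of x i] by (simp add: mult.assoc)
  also have "\<dots> = of_nat i * (x ^ (i - 1) * D (D x) + D x * D (x ^ (i - 1)))" using der_cnat[OF D] der_U(2)[OF D] by simp
  also have "\<dots> = of_nat i * (x ^ (i - 1) * D (D x) + D x * (of_nat (i - 1) * x ^ (i - 2) * D x))"
  proof -
    have "i - 1 - 1 = i - 2" by simp
    then show ?thesis using der_pow[OF D, of x "i - 1"] by metis
  qed
  also have "\<dots> = D (D x) * of_nat i * x ^ (i - 1) + (D x)^2 * (of_nat i * of_nat (i - 1)) * x ^ (i - 2)"
    by (simp add: algebra_simps power2_eq_square)
  finally show "D (D (x ^ i)) = D (D x) * of_nat i * x ^ (i - 1) + (D x)^2 * (of_nat i * of_nat (i - 1)) * x ^ (i - 2)" .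
qed

lemma ker_sf: assumes D: "der UNIV D" shows "sf {x. D x = 0}"
  unfolding sf_def
proof (intro conjI ballI)
  show "0 \<in> {x. D x = 0}" "1 \<in> {x. D x = 0}" using der_U[OF D] by auto
  fix x y assume "x \<in> {x. D x = 0}" "y \<in> {x. D x = 0}"
  then show "x + y \<in> {x. D x = 0}" "x * y \<in> {x. D x = 0}" using der_U[OF D] by auto
next
  fix x assume x: "x \<in> {x. D x = 0}"
  then show "- x \<in> {x. D x = 0}" using der_U[OF D] by auto
  show "inverse x \<in> {x. D x = 0}"
  proof (cases "x = 0")
    case True then show ?thesis using der_U[OF D] by simp
  next
    case False
    have "D (x * inverse x) = x * D (inverse x) + inverse x * D x" using der_U(2)[OF D] .
    then have "x * D (inverse x) = 0" using False x der_U(4)[OF D] by simp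
    then show ?thesis using False by simp
  qed
qed

lemma der_poly: assumes D: "der UNIV D"
  shows "D (poly p x) = poly (map_poly D p) x + poly (pderiv p) x * D x"
proof (induction p)
  case 0 then show ?case using der_U[OF D] by simp
next
  case (pCons a p)
  have "D (poly (pCons a p) x) = D a + (x * D (poly p x) + poly p x * D x)" using der_U[OF D] by simp
  then show ?case using pCons.IH der_U(3)[OF D] by (simp add: map_poly_pCons pderiv_pCons algebra_simps)
qed

lemma der_alg_zero:
  assumes D: "der UNIV D" and K: "sf K" and kz: "\<forall>x\<in>K. D x = 0" and a: "alg K z"
  shows "D z = 0"
proof -
  obtain m where mp: "minp K z m" using minp_ex[OF a] by blast
  have m: "m \<in> KP K" "poly m z = 0" using mp unfolding minp_def by auto
  have "map_poly D m = 0" using m(1) kz der_U(3)[OF D] by (intro poly_eqI) (simp add: coeff_map_poly KP_coeff)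
  then have "0 = poly (pderiv m) z * D z" using der_poly[OF D, of m z] m(2) der_U(3)[OF D] by simp
  then show ?thesis using minp_pderiv[OF K mp] by simp
qed

definition gen :: "complex set \<Rightarrow> complex set" where
  "gen S = \<Inter>{L. sf L \<and> S \<subseteq> L}"

lemma gen_sf: "sf (gen S)"
  unfolding sf_def gen_def by (auto simp: sf_0 sf_1 sf_add sf_mult sf_uminus sf_inverse)

lemma gen_sub: "S \<subseteq> gen S" unfolding gen_def by blast
lemma gen_min: "sf L \<Longrightarrow> S \<subseteq> L \<Longrightarrow> gen S \<subseteq> L" unfolding gen_def by blast


lemma map_fix: "map f xs = xs \<Longrightarrow> s \<in> set xs \<Longrightarrow> f s = s"
  by (metis list.map_id map_eq_conv id_apply)

theorem proposition4p6:
  fixes n :: nat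
  assumes "n > 1"
  shows "\<not> elim_finite_imaginaries n"
proof
  assume E: "elim_finite_imaginaries n"
  have n2: "2 \<le> n" using assms by simp
  obtain \<alpha> :: complex where a: "\<not> alg \<rat> \<alpha>" using exists_transcendental by blast
  obtain D where D: "der UNIV D" "D \<alpha> = 1" using exists_der[OF a] by blast
  have a0: "\<alpha> \<noteq> 0" using a alg_self[OF sf_Rats, of 0] by auto
  define F :: "(complex list \<times> (complex \<times> complex) list) set" where "F = {([], [(\<alpha>, 0)]), ([], [(- \<alpha>, 0)])}"
  have Fs: "finite F" "\<forall>(a, b)\<in>F. length a = 0 \<and> length b = 1" unfolding F_def by auto
  obtain cp cs where "is_code n 0 1 F cp cs" using E Fs unfolding elim_finite_imaginaries_def by blast
  then obtain \<phi> where dw: "defines_with n 0 1 \<phi> cp cs F"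
    and U: "\<forall>cp' cs'. length cp' = length cp \<and> length cs' = length cs \<and> defines_with n 0 1 \<phi> cp' cs' F
        \<longrightarrow> cp' = cp \<and> cs' = cs"
    unfolding is_code_def by blast
  have fixc: "map sp cp = cp \<and> map ss cs = cs" if A: "isaut n sp ss" and FF: "tmap sp ss ` F = F" for sp ss
  proof -
    have "defines_with n 0 1 \<phi> (map sp cp) (map ss cs) F" using dw_aut[OF A dw] FF by simp
    then show ?thesis using U[rule_format, of "map sp cp" "map ss cs"] by simp
  qed
  have moveF: "tmap sp ss ` F = F" if A: "isaut n sp ss" and c: "map sp cp = cp" "map ss cs = cs" for sp ss
  proof -
    have "defines_with n 0 1 \<phi> cp cs (tmap sp ss ` F)" using dw_aut[OF A dw] c by simp
    moreover have "\<forall>(a, b)\<in>tmap sp ss ` F. length a = 0 \<and> length b = 1" using Fs(2) unfolding tmap_def by auto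
    ultimately show ?thesis using dw_unique[OF dw _ Fs(2)] by blast
  qed
  \<comment> \<open>Step 1: the automorphism given by the second-order operator D o D fixes F\<close>
  have add2: "\<And>a b. D (D (a + b)) = D (D a) + D (D b)" using der_U(1)[OF D(1)] by simp
  have A2: "isaut n id (\<lambda>s. (fst s, snd s + D (D (fst s))))" using isaut_f[OF add2 adm_DD[OF D(1) n2]] .
  have DD: "D (D \<alpha>) = 0" using D der_U(4)[OF D(1)] by simp
  have DDn: "D (D (- \<alpha>)) = 0" using DD der_U(5)[OF D(1)] by simp
  have "tmap id (\<lambda>s. (fst s, snd s + D (D (fst s)))) ` F = F" unfolding F_def tmap_def using DD DDn by simp
  hence c1: "map (\<lambda>s. (fst s, snd s + D (D (fst s)))) cs = cs" using fixc[OF A2] by blast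
  have dd0: "D (D (fst s)) = 0" if "s \<in> set cs" for s
    using map_fix[OF c1 that] by (simp add: prod_eq_iff)
  \<comment> \<open>Step 2: a field automorphism fixing the relevant constants and sending alpha to its negative\<close>
  define S where "S = (\<Union>s\<in>set cs. {D (fst s), fst s - D (fst s) * \<alpha>})"
  define K where "K = gen S"
  have Ksf: "sf K" unfolding K_def by (rule gen_sf)
  have SK: "S \<subseteq> K" unfolding K_def by (rule gen_sub)
  have Sker: "S \<subseteq> {x. D x = 0}"
  proof
    fix y assume "y \<in> S"
    then obtain s where s: "s \<in> set cs" "y = D (fst s) \<or> y = fst s - D (fst s) * \<alpha>" unfolding S_def by blast
    have "D (fst s - D (fst s) * \<alpha>) = D (fst s) - D (D (fst s) * \<alpha>)"
      using der_U(1)[OF D(1), of "fst s" "- (D (fst s) * \<alpha>)"] der_U(5)[OF D(1), of "D (fst s) * \<alpha>"] by simp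
    also have "D (D (fst s) * \<alpha>) = D (fst s) * D \<alpha> + \<alpha> * D (D (fst s))"
      by (rule der_U(2)[OF D(1)])
    also have "D (fst s) - (D (fst s) * D \<alpha> + \<alpha> * D (D (fst s))) = 0" using D(2) dd0[OF s(1)] by simp
    finally show "y \<in> {x. D x = 0}" using s dd0[OF s(1)] by auto
  qed
  have KD: "\<forall>x\<in>K. D x = 0" using gen_min[OF ker_sf[OF D(1)] Sker] unfolding K_def by blast
  have na: "\<not> alg K \<alpha>" using der_alg_zero[OF D(1) Ksf KD] D(2) by auto
  obtain \<tau> where t: "emb UNIV \<tau>" "surj \<tau>" "\<tau> \<alpha> = - \<alpha>" "\<forall>x\<in>K. \<tau> x = x" using exists_aut[OF Ksf na] by blast
  have A3: "isaut n \<tau> (\<lambda>s. (\<tau> (fst s), \<tau> (snd s)))" using isaut_tau[OF t(1,2)] .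
  have tn: "\<tau> (- \<alpha>) = \<alpha>" using t(3) emb_U(5)[OF t(1)] by simp
  have "tmap \<tau> (\<lambda>s. (\<tau> (fst s), \<tau> (snd s))) ` F = F" unfolding F_def tmap_def
    using t(3) tn emb_U(3)[OF t(1)] by auto
  hence c3: "map (\<lambda>s. (\<tau> (fst s), \<tau> (snd s))) cs = cs" using fixc[OF A3] by blast
  have d0: "D (fst s) = 0" if s: "s \<in> set cs" for s
  proof -
    define g where "g = fst s"
    define a' where "a' = D g"
    define b where "b = g - a' * \<alpha>"
    have abK: "a' \<in> K" "b \<in> K" using SK s unfolding S_def a'_def b_def g_def by auto
    have tg: "\<tau> g = g" using map_fix[OF c3 s] unfolding g_def by (simp add: prod_eq_iff)
    have g: "g = a' * \<alpha> + b" unfolding b_def by simp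
    have "\<tau> g = \<tau> a' * \<tau> \<alpha> + \<tau> b" unfolding g using emb_U(1,2)[OF t(1)] by simp
    also have "\<dots> = - a' * \<alpha> + b" using t(3,4) abK by simp
    finally have "a' * \<alpha> + b = - a' * \<alpha> + b" using tg g by simp
    hence "a' * \<alpha> = 0" by auto
    thus ?thesis using a0 unfolding a'_def g_def by simp
  qed
  \<comment> \<open>Step 3: the automorphism given by D fixes the code, hence must fix F, which it does not\<close>
  have add1: "\<And>a b. D (a + b) = D a + D b" using der_U(1)[OF D(1)] .
  have A4: "isaut n id (\<lambda>s. (fst s, snd s + D (fst s)))" using isaut_f[OF add1 adm_D[OF D(1) n2]] .
  have "map (\<lambda>s. (fst s, snd s + D (fst s))) cs = cs" using d0 by (intro map_idI) simp
  moreover have "map id cp = cp" by simp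
  ultimately have "tmap id (\<lambda>s. (fst s, snd s + D (fst s))) ` F = F" using moveF[OF A4] by blast
  moreover have "tmap id (\<lambda>s. (fst s, snd s + D (fst s))) ([], [(\<alpha>, 0)]) \<in> tmap id (\<lambda>s. (fst s, snd s + D (fst s))) ` F"
    unfolding F_def by blast
  ultimately have "([], [(\<alpha>, 1)]) \<in> F" using D(2) unfolding tmap_def by simp
  then show False unfolding F_def by simp
qed


end
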